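(* Let $\gamma\in(0,+\infty)\setminus\mathbb N$, $f\in C^\infty(\mathbb S^n)$ and $m\in\mathbb N$. Then $B^{2\gamma}_{2j}(\rho^{2j}f)=f$ and $B^{2\gamma}_{2j}(\rho^{2j+2m}f)=0$ for $0\le j\le\lfloor\gamma/2\rfloor$, and $B^{2\gamma}_{2j+2[\gamma]}(\rho^{2j+2[\gamma]}f)=f$ and $B^{2\gamma}_{2j+2[\gamma]}(\rho^{2j+2[\gamma]+2m}f)=0$ for $0\le j\le\lfloor\gamma\rfloor-\lfloor\gamma/2\rfloor-1$.
   Context: $n\ge1$, $\mathbb B^{n+1}$ the unit ball in $\mathbb R^{n+1}$, $x=r\theta$, functions on $\mathbb S^n$ extended by $f(r\theta)=f(\theta)$; $\mathbb N=\{1,2,\dots\}$. $g_{\mathbb B}=\frac{4|dx|^2}{(1-|x|^2)^2}$, $\Delta_+$ its Laplace–Beltrami operator, $\rho=\frac{2(1-r)}{1+r}$. $\lfloor\gamma\rfloor$ integer part, $[\gamma]=\gamma-\lfloor\gamma\rfloor$, $s=\frac n2+\gamma$, $D_t=-\Delta_+-t(n-t)$. Boundary operators (small indices): $B^{2\gamma}_0(U)=U|_{\rho=0}$; for $1\le j\le\lfloor\gamma/2\rfloor$, $B^{2\gamma}_{2j}(U)=\frac1{b_{2j}}\rho^{-\frac n2+\gamma-2j}\prod_{l=0}^{j-1}D_{s-2l}\prod_{l=\lfloor\gamma\rfloor-j+1}^{\lfloor\gamma\rfloor}D_{s-2l}(\rho^{\frac n2-\gamma}U)|_{\rho=0}$;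 for $0\le j\le\lfloor\gamma\rfloor-\lfloor\gamma/2\rfloor-1$, $B^{2\gamma}_{2j+2[\gamma]}(U)=\frac{-1}{b_{2j+2[\gamma]}}\rho^{-\frac n2+\gamma-2j-2[\gamma]}\prod_{l=0}^{j}D_{s-2l}\prod_{l=\lfloor\gamma\rfloor-j+1}^{\lfloor\gamma\rfloor}D_{s-2l}(\rho^{\frac n2-\gamma}U)|_{\rho=0}$, where the nonzero constants $b_{2j},b_{2j+2[\gamma]}$ are chosen so that $B^{2\gamma}_{2j}(\rho^{2j})=1$ and $B^{2\gamma}_{2j+2[\gamma]}(\rho^{2j+2[\gamma]})=1$. *)

theory Defs
  imports "HOL-Analysis.Analysis"
begin

text \<open>The unit ball B^{n+1} is modelled inside a Euclidean space 'a with DIM('a) = n+1.\<close>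

definition partial_dir :: "'a::euclidean_space \<Rightarrow> ('a \<Rightarrow> real) \<Rightarrow> 'a \<Rightarrow> real" where
  "partial_dir b u x = deriv (\<lambda>t. u (x + t *\<^sub>R b)) 0"

definition partials :: "'a::euclidean_space list \<Rightarrow> ('a \<Rightarrow> real) \<Rightarrow> 'a \<Rightarrow> real" where
  "partials bs u = foldr partial_dir bs u"

definition smooth_on :: "'a::euclidean_space set \<Rightarrow> ('a \<Rightarrow> real) \<Rightarrow> bool" where
  "smooth_on S u \<longleftrightarrow> (\<forall>bs. set bs \<subseteq> Basis \<longrightarrow>
      continuous_on S (partials bs u) \<and>
      (\<forall>b\<in>Basis. \<forall>x\<in>S. (\<lambda>t. partials bs u (x + t *\<^sub>R b)) field_differentiable (at 0)))"

text \<open>Radial extension f(r\<theta>) = f(\<theta>); f is smooth on the sphere iff its radial extension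
  is smooth on the punctured space.\<close>
definition radial_ext :: "('a::euclidean_space \<Rightarrow> real) \<Rightarrow> 'a \<Rightarrow> real" where
  "radial_ext f x = f (x /\<^sub>R norm x)"

definition smooth_on_sphere :: "('a::euclidean_space \<Rightarrow> real) \<Rightarrow> bool" where
  "smooth_on_sphere f \<longleftrightarrow> smooth_on (- {0}) (radial_ext f)"

text \<open>Conformal factor: g_B = lam^2 |dx|^2 with lam = 2/(1-|x|^2).\<close>
definition lamB :: "'a::euclidean_space \<Rightarrow> real" where
  "lamB x = 2 / (1 - (norm x)\<^sup>2)"

text \<open>Laplace--Beltrami of g_B in coordinates: (1/sqrt g) d_i (sqrt g g^{ij} d_j u),
  with sqrt g = lam^N, g^{ij} = lam^{-2} delta_ij, N = DIM('a).\<close>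
definition LB :: "('a::euclidean_space \<Rightarrow> real) \<Rightarrow> 'a \<Rightarrow> real" where
  "LB u x = (1 / lamB x ^ DIM('a)) *
     (\<Sum>b\<in>Basis. partial_dir b (\<lambda>y. lamB y ^ DIM('a) * (1 / (lamB y)\<^sup>2) * partial_dir b u y) x)"

definition rhoB :: "'a::euclidean_space \<Rightarrow> real" where
  "rhoB x = 2 * (1 - norm x) / (1 + norm x)"

definition Dop :: "nat \<Rightarrow> real \<Rightarrow> ('a::euclidean_space \<Rightarrow> real) \<Rightarrow> 'a \<Rightarrow> real" where
  "Dop n t u x = - LB u x - t * (real n - t) * u x"

definition Dprod :: "nat \<Rightarrow> real list \<Rightarrow> ('a::euclidean_space \<Rightarrow> real) \<Rightarrow> 'a \<Rightarrow> real" where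
  "Dprod n ts u = foldr (Dop n) ts u"

definition sval :: "nat \<Rightarrow> real \<Rightarrow> real" where
  "sval n \<gamma> = real n / 2 + \<gamma>"

definition fracp :: "real \<Rightarrow> real" where
  "fracp \<gamma> = \<gamma> - of_int \<lfloor>\<gamma>\<rfloor>"

definition ts_even :: "nat \<Rightarrow> real \<Rightarrow> nat \<Rightarrow> real list" where
  "ts_even n \<gamma> j = map (\<lambda>l. sval n \<gamma> - 2 * real l)
     ([0..<j] @ [nat \<lfloor>\<gamma>\<rfloor> + 1 - j ..< nat \<lfloor>\<gamma>\<rfloor> + 1])"

definition ts_odd :: "nat \<Rightarrow> real \<Rightarrow> nat \<Rightarrow> real list" where
  "ts_odd n \<gamma> j = map (\<lambda>l. sval n \<gamma> - 2 * real l)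
     ([0..<j+1] @ [nat \<lfloor>\<gamma>\<rfloor> + 1 - j ..< nat \<lfloor>\<gamma>\<rfloor> + 1])"

definition Bpre_even :: "nat \<Rightarrow> real \<Rightarrow> nat \<Rightarrow> ('a::euclidean_space \<Rightarrow> real) \<Rightarrow> 'a \<Rightarrow> real" where
  "Bpre_even n \<gamma> j U x = rhoB x powr (- real n / 2 + \<gamma> - 2 * real j) *
     Dprod n (ts_even n \<gamma> j) (\<lambda>y. rhoB y powr (real n / 2 - \<gamma>) * U y) x"

definition Bpre_odd :: "nat \<Rightarrow> real \<Rightarrow> nat \<Rightarrow> ('a::euclidean_space \<Rightarrow> real) \<Rightarrow> 'a \<Rightarrow> real" where
  "Bpre_odd n \<gamma> j U x = rhoB x powr (- real n / 2 + \<gamma> - 2 * real j - 2 * fracp \<gamma>) *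
     Dprod n (ts_odd n \<gamma> j) (\<lambda>y. rhoB y powr (real n / 2 - \<gamma>) * U y) x"

text \<open>Boundary value (restriction to rho = 0) of a function V at a boundary point:
  the limit of V(x) as x tends to the point from inside the ball.\<close>
definition bdry_val :: "('a::euclidean_space \<Rightarrow> real) \<Rightarrow> 'a \<Rightarrow> real" where
  "bdry_val V \<theta> = Lim (at \<theta> within ball 0 1) V"

definition base_pt :: "'a::euclidean_space" where
  "base_pt = (SOME b. b \<in> Basis)"

text \<open>Normalising constants: B(rho^{2j}) = 1 and B(rho^{2j+2[gamma]}) = 1
  (the unnormalised boundary values of radial functions are constant on the sphere).\<close>
definition b_even :: "nat \<Rightarrow> real \<Rightarrow> nat \<Rightarrow> 'a::euclidean_space itself \<Rightarrow> real" where
  "b_even n \<gamma> j _ = bdry_val (Bpre_even n \<gamma> j (\<lambda>x::'a. rhoB x ^ (2 * j))) base_pt"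

definition b_odd :: "nat \<Rightarrow> real \<Rightarrow> nat \<Rightarrow> 'a::euclidean_space itself \<Rightarrow> real" where
  "b_odd n \<gamma> j _ = - bdry_val (Bpre_odd n \<gamma> j (\<lambda>x::'a. rhoB x powr (2 * real j + 2 * fracp \<gamma>))) base_pt"

text \<open>The operators before restriction to rho = 0 (B_0(U) = U).\<close>
definition Bfun_even :: "nat \<Rightarrow> real \<Rightarrow> nat \<Rightarrow> ('a::euclidean_space \<Rightarrow> real) \<Rightarrow> 'a \<Rightarrow> real" where
  "Bfun_even n \<gamma> j U x = (if j = 0 then U x
     else (1 / b_even n \<gamma> j TYPE('a)) * Bpre_even n \<gamma> j U x)"

definition Bfun_odd :: "nat \<Rightarrow> real \<Rightarrow> nat \<Rightarrow> ('a::euclidean_space \<Rightarrow> real) \<Rightarrow> 'a \<Rightarrow> real" where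
  "Bfun_odd n \<gamma> j U x = (- 1 / b_odd n \<gamma> j TYPE('a)) * Bpre_odd n \<gamma> j U x"

end

theory Submission
  imports Defs "HOL-Computational_Algebra.Polynomial"
begin

lemma ev_line:
  fixes x c :: "'a::real_normed_vector"
  assumes "open S" "x \<in> S"
  shows "\<forall>\<^sub>F t in nhds (0::real). x + t *\<^sub>R c \<in> S"
proof -
  have "continuous_on UNIV (\<lambda>t::real. x + t *\<^sub>R c)" by (intro continuous_intros)
  then have o: "open ((\<lambda>t::real. x + t *\<^sub>R c) -` S)"
    using assms(1) open_vimage by blast
  have "(0::real) \<in> (\<lambda>t::real. x + t *\<^sub>R c) -` S" using assms(2) by simp
  from eventually_nhds_in_open[OF o this] show ?thesis by simp
qed

lemma pd_cong:
  assumes "open S" "\<forall>y\<in>S. u y = v y" "x \<in> S"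
  shows "partial_dir c u x = partial_dir c v x"
  unfolding partial_dir_def
  by (rule deriv_cong_ev) (use ev_line[OF assms(1,3), of c] assms(2) in \<open>auto elim: eventually_mono\<close>)

lemma partials_Cons: "partials (c # bs) u = partial_dir c (partials bs u)"
  by (simp add: partials_def)

lemma partials_Nil[simp]: "partials [] u = u"
  by (simp add: partials_def)

lemma partials_append1: "partials (bs @ [c]) u = partials bs (partial_dir c u)"
  by (simp add: partials_def)

lemma partials_cong:
  assumes "open S" "\<forall>y\<in>S. u y = v y"
  shows "\<forall>x\<in>S. partials bs u x = partials bs v x"
proof (induction bs)
  case Nil then show ?case using assms by simp
next
  case (Cons c bs)
  then show ?case unfolding partials_Cons using pd_cong[OF assms(1) Cons] by blast
qed

lemma sm_cont:
  assumes "smooth_on S f" shows "continuous_on S f"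
proof -
  have e: "set ([]::'a list) \<subseteq> Basis" by simp
  from assms[unfolded smooth_on_def, rule_format, OF e] show ?thesis by simp
qed

lemma sm_line_deriv:
  assumes "smooth_on S f" "x \<in> S" "c \<in> Basis"
  shows "((\<lambda>t. f (x + t *\<^sub>R c)) has_real_derivative partial_dir c f x) (at 0)"
proof -
  have e: "set ([]::'a list) \<subseteq> Basis" by simp
  have "(\<lambda>t. partials [] f (x + t *\<^sub>R c)) field_differentiable (at 0)"
    using assms(1)[unfolded smooth_on_def, rule_format, OF e] assms(2,3) by blast
  then have "(\<lambda>t. f (x + t *\<^sub>R c)) field_differentiable (at 0)" by simp
  then show ?thesis unfolding partial_dir_def
    using DERIV_deriv_iff_field_differentiable by blast
qed

lemma line_deriv_at:
  fixes x c :: "'a::real_normed_vector"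
  assumes "((\<lambda>s. f (x + t0 *\<^sub>R c + s *\<^sub>R c)) has_real_derivative D) (at 0)"
  shows "((\<lambda>t. f (x + t *\<^sub>R c)) has_real_derivative D) (at t0)"
proof -
  have e: "(\<lambda>s. f (x + (s + t0) *\<^sub>R c)) = (\<lambda>s. f (x + t0 *\<^sub>R c + s *\<^sub>R c))"
    by (simp add: scaleR_add_left algebra_simps)
  have "((\<lambda>s. f (x + (s + t0) *\<^sub>R c)) has_real_derivative D) (at 0)"
    unfolding e by (rule assms)
  then show ?thesis using DERIV_shift[of "\<lambda>t. f (x + t *\<^sub>R c)" D 0 t0] by simp
qed

lemma sm_partial:
  assumes "smooth_on S u" "b \<in> Basis"
  shows "smooth_on S (partial_dir b u)"
  unfolding smooth_on_def
proof (intro allI impI)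
  fix bs :: "'a list" assume "set bs \<subseteq> Basis"
  then have "set (bs @ [b]) \<subseteq> Basis" using assms(2) by simp
  from assms(1)[unfolded smooth_on_def, rule_format, OF this]
  show "continuous_on S (partials bs (partial_dir b u)) \<and>
      (\<forall>ba\<in>Basis. \<forall>x\<in>S. (\<lambda>t. partials bs (partial_dir b u) (x + t *\<^sub>R ba)) field_differentiable at 0)"
    by (simp add: partials_append1)
qed

lemma sm_cong:
  assumes "smooth_on S u" "open S" "\<forall>y\<in>S. u y = v y"
  shows "smooth_on S v"
  unfolding smooth_on_def
proof (intro allI impI conjI ballI)
  fix bs :: "'a list" assume bs: "set bs \<subseteq> Basis"
  have eq: "\<forall>x\<in>S. partials bs u x = partials bs v x" using partials_cong[OF assms(2,3)] .
  show "continuous_on S (partials bs v)"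
    using assms(1)[unfolded smooth_on_def, rule_format, OF bs] eq continuous_on_eq by blast
  fix b x :: 'a assume b: "b \<in> Basis" and x: "x \<in> S"
  have d: "(\<lambda>t. partials bs u (x + t *\<^sub>R b)) field_differentiable (at 0)"
    using assms(1) bs b x unfolding smooth_on_def by blast
  have ev: "\<forall>\<^sub>F t in nhds 0. partials bs u (x + t *\<^sub>R b) = partials bs v (x + t *\<^sub>R b)"
    using ev_line[OF assms(2) x, of b] eq by (auto elim: eventually_mono)
  from d obtain D where "((\<lambda>t. partials bs u (x + t *\<^sub>R b)) has_field_derivative D) (at 0)"
    unfolding field_differentiable_def by blast
  then have "((\<lambda>t. partials bs v (x + t *\<^sub>R b)) has_field_derivative D) (at 0)"
    using DERIV_cong_ev[OF refl ev refl] by blast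
  then show "(\<lambda>t. partials bs v (x + t *\<^sub>R b)) field_differentiable (at 0)"
    unfolding field_differentiable_def by blast
qed

definition sprod :: "(('a \<Rightarrow> real) \<times> ('a \<Rightarrow> real)) list \<Rightarrow> 'a \<Rightarrow> real" where
  "sprod L y = (\<Sum>(f,g)\<leftarrow>L. f y * g y)"

definition dlist :: "'a::euclidean_space \<Rightarrow> (('a \<Rightarrow> real) \<times> ('a \<Rightarrow> real)) list \<Rightarrow> (('a \<Rightarrow> real) \<times> ('a \<Rightarrow> real)) list" where
  "dlist c L = concat (map (\<lambda>(f,g). [(partial_dir c f, g), (f, partial_dir c g)]) L)"

lemma sprod_deriv:
  assumes "\<forall>(f,g)\<in>set L. smooth_on S f \<and> smooth_on S g" "x \<in> S" "c \<in> Basis"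
  shows "((\<lambda>t. sprod L (x + t *\<^sub>R c)) has_real_derivative sprod (dlist c L) x) (at 0)"
  using assms(1)
proof (induction L)
  case Nil then show ?case by (simp add: sprod_def dlist_def)
next
  case (Cons p L)
  obtain f g where p: "p = (f,g)" by fastforce
  have sf: "smooth_on S f" and sg: "smooth_on S g" using Cons.prems p by auto
  have d1: "((\<lambda>t. f (x + t *\<^sub>R c)) has_real_derivative partial_dir c f x) (at 0)"
    by (rule sm_line_deriv[OF sf assms(2,3)])
  have d2: "((\<lambda>t. g (x + t *\<^sub>R c)) has_real_derivative partial_dir c g x) (at 0)"
    by (rule sm_line_deriv[OF sg assms(2,3)])
  have IH: "((\<lambda>t. sprod L (x + t *\<^sub>R c)) has_real_derivative sprod (dlist c L) x) (at 0)"
    using Cons.IH Cons.prems by auto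
  have "((\<lambda>t. f (x + t *\<^sub>R c) * g (x + t *\<^sub>R c) + sprod L (x + t *\<^sub>R c)) has_real_derivative
     (partial_dir c f x * g (x + 0 *\<^sub>R c) + partial_dir c g x * f (x + 0 *\<^sub>R c)) + sprod (dlist c L) x) (at 0)"
    by (intro DERIV_add DERIV_mult d1 d2 IH)
  then show ?case by (simp add: p sprod_def dlist_def algebra_simps)
qed

lemma sprod_cont:
  assumes "\<forall>(f,g)\<in>set L. smooth_on S f \<and> smooth_on S g"
  shows "continuous_on S (sprod L)"
  using assms
proof (induction L)
  case Nil then show ?case by (simp add: sprod_def[abs_def])
next
  case (Cons p L)
  obtain f g where p: "p = (f,g)" by fastforce
  have "continuous_on S f" "continuous_on S g" using Cons.prems p by (auto intro: sm_cont)
  then have "continuous_on S (\<lambda>y. f y * g y + sprod L y)"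
    using Cons by (intro continuous_intros) auto
  then show ?case by (simp add: p sprod_def[abs_def])
qed

lemma dlist_smooth:
  assumes "\<forall>(f,g)\<in>set L. smooth_on S f \<and> smooth_on S g" "c \<in> Basis"
  shows "\<forall>(f,g)\<in>set (dlist c L). smooth_on S f \<and> smooth_on S g"
  using assms by (auto simp: dlist_def intro: sm_partial)

lemma sprod_partials:
  assumes "\<forall>(f,g)\<in>set L. smooth_on S f \<and> smooth_on S g" "open S" "set bs \<subseteq> Basis"
  shows "\<exists>L'. (\<forall>(f,g)\<in>set L'. smooth_on S f \<and> smooth_on S g) \<and>
           (\<forall>x\<in>S. partials bs (sprod L) x = sprod L' x)"
  using assms(3)
proof (induction bs)
  case Nil then show ?case using assms(1) by (intro exI[of _ L]) auto
next
  case (Cons c bs)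
  then obtain L' where L': "\<forall>(f,g)\<in>set L'. smooth_on S f \<and> smooth_on S g"
     "\<forall>x\<in>S. partials bs (sprod L) x = sprod L' x" by auto
  have c: "c \<in> Basis" using Cons.prems by auto
  show ?case
  proof (intro exI[of _ "dlist c L'"] conjI)
    show "\<forall>(f,g)\<in>set (dlist c L'). smooth_on S f \<and> smooth_on S g" using dlist_smooth[OF L'(1) c] .
    show "\<forall>x\<in>S. partials (c # bs) (sprod L) x = sprod (dlist c L') x"
    proof
    fix x assume x: "x \<in> S"
    have "partials (c # bs) (sprod L) x = partial_dir c (sprod L') x"
      unfolding partials_Cons using pd_cong[OF assms(2) L'(2) x] .
    also have "\<dots> = sprod (dlist c L') x"
      unfolding partial_dir_def using sprod_deriv[OF L'(1) x c] by (rule DERIV_imp_deriv)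
    finally show "partials (c # bs) (sprod L) x = sprod (dlist c L') x" .
    qed
  qed
qed

lemma sm_sprod:
  assumes "\<forall>(f,g)\<in>set L. smooth_on S f \<and> smooth_on S g" "open S"
  shows "smooth_on S (sprod L)"
  unfolding smooth_on_def
proof (intro allI impI conjI ballI)
  fix bs :: "'a list" assume bs: "set bs \<subseteq> Basis"
  obtain L' where L': "\<forall>(f,g)\<in>set L'. smooth_on S f \<and> smooth_on S g"
     "\<forall>x\<in>S. partials bs (sprod L) x = sprod L' x" using sprod_partials[OF assms bs] by blast
  show "continuous_on S (partials bs (sprod L))"
    using sprod_cont[OF L'(1)] L'(2) continuous_on_eq by (metis (no_types, lifting))
  fix b x :: 'a assume b: "b \<in> Basis" and x: "x \<in> S"
  have ev: "\<forall>\<^sub>F t in nhds 0. sprod L' (x + t *\<^sub>R b) = partials bs (sprod L) (x + t *\<^sub>R b)"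
    using ev_line[OF assms(2) x, of b] L'(2) by (auto elim: eventually_mono)
  have "((\<lambda>t. partials bs (sprod L) (x + t *\<^sub>R b)) has_field_derivative sprod (dlist b L') x) (at 0)"
    using DERIV_cong_ev[OF refl ev refl] sprod_deriv[OF L'(1) x b] by blast
  then show "(\<lambda>t. partials bs (sprod L) (x + t *\<^sub>R b)) field_differentiable (at 0)"
    unfolding field_differentiable_def by blast
qed

lemma pd_const: "partial_dir c (\<lambda>y. k) = (\<lambda>y. 0)"
  unfolding partial_dir_def by (intro ext DERIV_imp_deriv) simp

lemma partials_const: "partials bs (\<lambda>y. k) = (\<lambda>y. if bs = [] then k else 0)"
  by (induction bs) (auto simp: partials_Cons pd_const)

lemma sm_const: "smooth_on S (\<lambda>y. k)"
  unfolding smooth_on_def partials_const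
  by (simp add: field_differentiable_const continuous_on_const)

lemma pd_inner: "partial_dir c (\<lambda>y. y \<bullet> b) = (\<lambda>y. c \<bullet> b)"
proof (intro ext)
  fix x :: 'a
  have "((\<lambda>t. (x + t *\<^sub>R c) \<bullet> b) has_real_derivative c \<bullet> b) (at 0)"
    unfolding inner_add_left inner_scaleR_left
    by (auto intro!: derivative_eq_intros)
  then show "partial_dir c (\<lambda>y. y \<bullet> b) x = c \<bullet> b" unfolding partial_dir_def by (rule DERIV_imp_deriv)
qed

lemma sm_inner: "smooth_on S (\<lambda>y::'a::euclidean_space. y \<bullet> b)"
  unfolding smooth_on_def
proof (intro allI impI conjI ballI)
  fix bs :: "'a list" assume "set bs \<subseteq> Basis"
  show "continuous_on S (partials bs (\<lambda>y. y \<bullet> b))"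
  proof (cases bs rule: rev_exhaust)
    case Nil then show ?thesis by (auto intro!: continuous_intros)
  next
    case (snoc ys c) then show ?thesis
      by (simp add: partials_append1 pd_inner partials_const continuous_on_const)
  qed
  fix c x
  show "(\<lambda>t. partials bs (\<lambda>y. y \<bullet> b) (x + t *\<^sub>R c)) field_differentiable (at 0)"
  proof (cases bs rule: rev_exhaust)
    case Nil
    have "((\<lambda>t. (x + t *\<^sub>R c) \<bullet> b) has_real_derivative c \<bullet> b) (at 0)"
      unfolding inner_add_left inner_scaleR_left by (auto intro!: derivative_eq_intros)
    then show ?thesis using Nil by (auto simp: field_differentiable_def)
  next
    case (snoc ys d)
    then have "(\<lambda>t. partials bs (\<lambda>y. y \<bullet> b) (x + t *\<^sub>R c)) = (\<lambda>t. if ys = [] then d \<bullet> b else 0)"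
      by (simp add: partials_append1 pd_inner partials_const)
    then show ?thesis by (simp add: field_differentiable_const)
  qed
qed

definition Cls :: "(real \<Rightarrow> real) \<Rightarrow> bool" where
  "Cls q \<longleftrightarrow> (\<exists>P i. \<forall>r>0. q r = poly P r / r ^ i)"

lemma Cls_const[intro]: "Cls (\<lambda>r. c)"
  unfolding Cls_def by (intro exI[of _ "[:c:]"] exI[of _ 0]) simp

lemma Cls_id[intro]: "Cls (\<lambda>r. r)"
  unfolding Cls_def by (intro exI[of _ "[:0,1:]"] exI[of _ 0]) simp

lemma Cls_inv[intro]: "Cls (\<lambda>r. 1 / r)"
  unfolding Cls_def by (intro exI[of _ "1"] exI[of _ 1]) simp

lemma Cls_add[intro]:
  assumes "Cls f" "Cls g" shows "Cls (\<lambda>r. f r + g r)"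
proof -
  obtain P i Q j where P: "\<forall>r>0. f r = poly P r / r ^ i" and Q: "\<forall>r>0. g r = poly Q r / r ^ j"
    using assms unfolding Cls_def by blast
  show ?thesis unfolding Cls_def
  proof (intro exI[of _ "P * [:0,1:] ^ j + Q * [:0,1:] ^ i"] exI[of _ "i + j"] allI impI)
    fix r :: real assume r: "r > 0"
    show "f r + g r = poly (P * [:0, 1:] ^ j + Q * [:0, 1:] ^ i) r / r ^ (i + j)"
      using P Q r by (simp add: poly_monom field_simps power_add)
  qed
qed

lemma Cls_mult[intro]:
  assumes "Cls f" "Cls g" shows "Cls (\<lambda>r. f r * g r)"
proof -
  obtain P i Q j where P: "\<forall>r>0. f r = poly P r / r ^ i" and Q: "\<forall>r>0. g r = poly Q r / r ^ j"
    using assms unfolding Cls_def by blast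
  show ?thesis unfolding Cls_def
  proof (intro exI[of _ "P * Q"] exI[of _ "i + j"] allI impI)
    fix r :: real assume r: "r > 0"
    show "f r * g r = poly (P * Q) r / r ^ (i + j)"
      using P Q r by (simp add: field_simps power_add)
  qed
qed

lemma Cls_minus[intro]:
  assumes "Cls f" "Cls g" shows "Cls (\<lambda>r. f r - g r)"
proof -
  have "Cls (\<lambda>r. f r + (-1) * g r)" by (rule Cls_add[OF assms(1) Cls_mult[OF Cls_const assms(2)]])
  then show ?thesis by simp
qed

lemma Cls_uminus[intro]:
  assumes "Cls f" shows "Cls (\<lambda>r. - f r)"
proof -
  have "Cls (\<lambda>r. (-1) * f r)" by (rule Cls_mult[OF Cls_const assms])
  then show ?thesis by simp
qed

lemma Cls_deriv_ex:
  assumes "Cls q" shows "\<exists>q1. Cls q1 \<and> (\<forall>r>0. (q has_real_derivative q1 r) (at r))"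
proof -
  obtain P i where P: "\<forall>r>0. q r = poly P r / r ^ i" using assms unfolding Cls_def by blast
  define Q where "Q = pderiv P * [:0,1:] - smult (of_nat i) P"
  show ?thesis
  proof (intro exI[of _ "\<lambda>r. poly Q r / r ^ Suc i"] conjI allI impI)
    show "Cls (\<lambda>r. poly Q r / r ^ Suc i)" unfolding Cls_def by blast
    fix r :: real assume r: "r > 0"
    have d: "((\<lambda>r. poly P r / r ^ i) has_real_derivative
        (poly (pderiv P) r * r ^ i - (real i * r ^ (i - Suc 0)) * poly P r) / ((r ^ i) ^ Suc (Suc 0))) (at r)"
      by (rule DERIV_quotient[OF poly_DERIV DERIV_pow]) (use r in simp)
    have e: "(poly (pderiv P) r * r ^ i - (real i * r ^ (i - Suc 0)) * poly P r) / ((r ^ i) ^ Suc (Suc 0))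
        = poly Q r / r ^ Suc i"
    proof (cases i)
      case 0 then show ?thesis using r by (simp add: Q_def field_simps)
    next
      case (Suc k) then show ?thesis using r by (simp add: Q_def field_simps)
    qed
    have ev: "\<forall>\<^sub>F s in nhds r. poly P s / s ^ i = q s"
      using eventually_nhds_in_open[of "{0<..}" r] r P by (auto elim!: eventually_mono)
    show "(q has_real_derivative poly Q r / r ^ Suc i) (at r)"
      using d e DERIV_cong_ev[OF refl ev refl] by simp
  qed
qed

definition dq :: "(real \<Rightarrow> real) \<Rightarrow> real \<Rightarrow> real" where
  "dq q = (SOME q1. Cls q1 \<and> (\<forall>r>0. (q has_real_derivative q1 r) (at r)))"

lemma dq:
  assumes "Cls q" shows "Cls (dq q)" "\<And>r. r > 0 \<Longrightarrow> (q has_real_derivative dq q r) (at r)"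
  using someI_ex[OF Cls_deriv_ex[OF assms]] unfolding dq_def by auto

lemma Cls_dq[intro]: "Cls q \<Longrightarrow> Cls (dq q)" using dq by blast

lemma Cls_isCont: "Cls q \<Longrightarrow> r > 0 \<Longrightarrow> isCont q r"
  using dq(2) DERIV_isCont by blast

definition rho :: "real \<Rightarrow> real" where "rho r = 2 * (1 - r) / (1 + r)"
definition lam :: "real \<Rightarrow> real" where "lam r = 2 / (1 - r\<^sup>2)"
definition Psi :: "nat \<Rightarrow> real \<Rightarrow> real" where "Psi N r = lam r ^ N * (1 / (lam r)\<^sup>2)"
definition Psi1 :: "nat \<Rightarrow> real \<Rightarrow> real" where
  "Psi1 N r = (real N - 2) * r * lam r ^ N / lam r"
definition phi :: "real \<Rightarrow> (real \<Rightarrow> real) \<Rightarrow> real \<Rightarrow> real" where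
  "phi a q r = rho r powr a * q r"
definition phi1 :: "real \<Rightarrow> (real \<Rightarrow> real) \<Rightarrow> real \<Rightarrow> real" where
  "phi1 a q r = rho r powr a * (dq q r - 2 * a * q r / (1 - r\<^sup>2))"
definition phi2 :: "real \<Rightarrow> (real \<Rightarrow> real) \<Rightarrow> real \<Rightarrow> real" where
  "phi2 a q r = rho r powr a * (dq (dq q) r - 4 * a * dq q r / (1 - r\<^sup>2)
      + 4 * a\<^sup>2 * q r / (1 - r\<^sup>2)\<^sup>2 - 4 * a * r * q r / (1 - r\<^sup>2)\<^sup>2)"

lemma rho_pos: "0 < r \<Longrightarrow> r < 1 \<Longrightarrow> rho r > 0"
  unfolding rho_def by simp

lemma w_pos: "0 < r \<Longrightarrow> r < 1 \<Longrightarrow> 1 - r\<^sup>2 > (0::real)"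
  by (simp add: power2_eq_square) (metis less_trans mult_strict_mono' mult_1_right le_less zero_le_mult_iff)

lemma rho_deriv: "r > -1 \<Longrightarrow> (rho has_real_derivative -4 / (1 + r)\<^sup>2) (at r)"
  unfolding rho_def[abs_def]
  by (auto intro!: derivative_eq_intros simp: field_simps power2_eq_square)

lemma rho_powr_deriv:
  assumes "0 < r" "r < 1"
  shows "((\<lambda>r. rho r powr a) has_real_derivative rho r powr a * (- 2 * a / (1 - r\<^sup>2))) (at r)"
proof -
  have p: "rho r > 0" using rho_pos assms by blast
  have w: "1 - r\<^sup>2 \<noteq> 0" using w_pos[OF assms] by simp
  have "((\<lambda>r. rho r powr a) has_real_derivative a * rho r powr (a - of_nat 1) * (-4 / (1 + r)\<^sup>2)) (at r)"
    by (rule DERIV_fun_powr[OF rho_deriv p]) (use assms in auto)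
  moreover have "a * rho r powr (a - 1) * (-4 / (1 + r)\<^sup>2) = rho r powr a * (- 2 * a / (1 - r\<^sup>2))"
  proof -
    have "rho r powr (a - 1) = rho r powr a / rho r" using p by (simp add: powr_diff)
    moreover have "\<And>R. a * (R / rho r) * (-4 / (1 + r)\<^sup>2) = R * (- 2 * a / (1 - r\<^sup>2))"
    proof -
      fix R
      define p s where "p = 1 - r" and "s = 1 + r"
      have h: "p \<noteq> 0" "s \<noteq> 0" using assms by (auto simp: p_def s_def)
      have e1: "rho r = 2 * p / s" "1 - r\<^sup>2 = p * s" "(1 + r)\<^sup>2 = s * s"
        by (auto simp: rho_def p_def s_def power2_eq_square algebra_simps)
      show "a * (R / rho r) * (-4 / (1 + r)\<^sup>2) = R * (- 2 * a / (1 - r\<^sup>2))"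
        unfolding e1 using h by (simp add: field_simps)
    qed
    ultimately show ?thesis by simp
  qed
  ultimately show ?thesis by simp
qed

lemma DERIV_eq: "(f has_real_derivative D) (at x) \<Longrightarrow> D = E \<Longrightarrow> (f has_real_derivative E) (at x)"
  by simp

lemma phi_deriv:
  assumes "Cls q" "0 < r" "r < 1"
  shows "(phi a q has_real_derivative phi1 a q r) (at r)"
  unfolding phi_def[abs_def] phi1_def
  by (rule DERIV_eq[OF DERIV_mult[OF rho_powr_deriv[OF assms(2,3)] dq(2)[OF assms(1,2)]]])
     (simp add: algebra_simps)

lemma inner1_deriv:
  assumes "Cls q" "0 < r" "r < 1"
  shows "((\<lambda>r. dq q r - 2 * a * q r / (1 - r\<^sup>2)) has_real_derivative
     dq (dq q) r - 2 * a * ((dq q r * (1 - r\<^sup>2) + q r * (2 * r)) / ((1 - r\<^sup>2) * (1 - r\<^sup>2)))) (at r)"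
proof -
  have w: "1 - r\<^sup>2 \<noteq> 0" using w_pos[OF assms(2,3)] by simp
  have d1: "(dq q has_real_derivative dq (dq q) r) (at r)" using dq(2)[OF Cls_dq[OF assms(1)] assms(2)] .
  have d2: "(q has_real_derivative dq q r) (at r)" using dq(2)[OF assms(1,2)] .
  have d3: "((\<lambda>r. 1 - r\<^sup>2) has_real_derivative - (2 * r)) (at r)"
    by (auto intro!: derivative_eq_intros)
  have e: "(\<lambda>r. dq q r - 2 * a * q r / (1 - r\<^sup>2)) = (\<lambda>r. dq q r - (2 * a) * (q r / (1 - r\<^sup>2)))"
    by auto
  show ?thesis unfolding e
    by (rule DERIV_eq[OF DERIV_diff[OF d1 DERIV_cmult[OF DERIV_quotient[OF d2 d3 w]]]])
       (simp add: power2_eq_square algebra_simps)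
qed

lemma phi1_deriv:
  assumes "Cls q" "0 < r" "r < 1"
  shows "(phi1 a q has_real_derivative phi2 a q r) (at r)"
proof -
  have w: "1 - r\<^sup>2 \<noteq> 0" using w_pos[OF assms(2,3)] by simp
  have "(phi1 a q has_real_derivative
      rho r powr a * (- 2 * a / (1 - r\<^sup>2)) * (dq q r - 2 * a * q r / (1 - r\<^sup>2)) +
      (dq (dq q) r - 2 * a * ((dq q r * (1 - r\<^sup>2) + q r * (2 * r)) / ((1 - r\<^sup>2) * (1 - r\<^sup>2)))) * rho r powr a) (at r)"
    unfolding phi1_def[abs_def]
    by (rule DERIV_mult[OF rho_powr_deriv[OF assms(2,3)] inner1_deriv[OF assms]])
  moreover have "\<And>R w. w \<noteq> 0 \<Longrightarrow> R * (- 2 * a / w) * (dq q r - 2 * a * q r / w) +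
      (dq (dq q) r - 2 * a * ((dq q r * w + q r * (2 * r)) / (w * w))) * R =
      R * (dq (dq q) r - 4 * a * dq q r / w + 4 * a\<^sup>2 * q r / w\<^sup>2 - 4 * a * r * q r / w\<^sup>2)"
    by (simp add: field_simps power2_eq_square)
  ultimately show ?thesis unfolding phi2_def using w by simp
qed

lemma lam_deriv:
  assumes "0 < r" "r < 1"
  shows "(lam has_real_derivative r * (lam r)\<^sup>2) (at r)"
proof -
  have w: "1 - r\<^sup>2 \<noteq> 0" using w_pos[OF assms] by simp
  have "(lam has_real_derivative - (2 * (- (2 * r))) / (1 - r\<^sup>2)\<^sup>2) (at r)"
    unfolding lam_def[abs_def] using w
    by (auto intro!: derivative_eq_intros simp: power2_eq_square)
  moreover have "\<And>w. w \<noteq> 0 \<Longrightarrow> - (2 * (- (2 * r))) / w\<^sup>2 = r * (2 / w)\<^sup>2"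
    by (simp add: field_simps power2_eq_square)
  ultimately show ?thesis using w unfolding lam_def by simp
qed

lemma lam_nz: "0 < r \<Longrightarrow> r < 1 \<Longrightarrow> lam r \<noteq> 0"
  using w_pos unfolding lam_def by fastforce

lemma Psi_deriv:
  assumes "0 < r" "r < 1" "N \<ge> 1"
  shows "(Psi N has_real_derivative Psi1 N r) (at r)"
proof -
  have L: "lam r \<noteq> 0" using lam_nz assms by blast
  obtain k where k: "N = Suc k" using assms(3) by (cases N) auto
  have ld: "(lam has_real_derivative r * (lam r)\<^sup>2) (at r)" by (rule lam_deriv[OF assms(1,2)])
  show ?thesis
    unfolding Psi_def[abs_def]
    by (rule DERIV_eq[OF DERIV_mult[OF DERIV_power[OF ld] DERIV_divide[OF DERIV_const DERIV_power[OF ld]]]])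
       (use L in \<open>simp_all add: Psi1_def k field_simps power2_eq_square\<close>)
qed

definition qG :: "real \<Rightarrow> real \<Rightarrow> real \<Rightarrow> (real \<Rightarrow> real) \<Rightarrow> real \<Rightarrow> real" where
  "qG a t n q = (\<lambda>r. - ((1 - r\<^sup>2) * (1 - r\<^sup>2) * (1/4) * dq (dq q) r
      + ((n - 1) * (1 - r\<^sup>2) * r * (1/2) + n * (1 - r\<^sup>2) * (1 - r\<^sup>2) * (1/4) * (1 / r) - a * (1 - r\<^sup>2)) * dq q r
      + (a * a - a * r - a * (n - 1) * r - a * n * (1 - r\<^sup>2) * (1/2) * (1 / r)) * q r) - t * (n - t) * q r)"

definition qE :: "real \<Rightarrow> real \<Rightarrow> (real \<Rightarrow> real) \<Rightarrow> real \<Rightarrow> real" where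
  "qE a n q = (\<lambda>r. - ((1 - r\<^sup>2) * (1 - r\<^sup>2) * (1/2) * (1 / r) * dq q r - a * (1 - r\<^sup>2) * (1 / r) * q r
      + (n - 1) * (1 - r\<^sup>2) * (1/2) * q r))"

definition qD :: "(real \<Rightarrow> real) \<Rightarrow> real \<Rightarrow> real" where
  "qD q = (\<lambda>r. - ((1 - r\<^sup>2) * (1 - r\<^sup>2) * (1/4) * q r))"

lemma Cls_sq[intro]: "Cls (\<lambda>r. r\<^sup>2)"
proof -
  have "Cls (\<lambda>r. r * r)" by (rule Cls_mult[OF Cls_id Cls_id])
  then show ?thesis by (simp add: power2_eq_square)
qed

lemma Cls_qG: "Cls q \<Longrightarrow> Cls (qG a t n q)"
  unfolding qG_def by (intro Cls_add Cls_mult Cls_minus Cls_uminus Cls_const Cls_id Cls_inv Cls_dq Cls_sq)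

lemma Cls_qE: "Cls q \<Longrightarrow> Cls (qE a n q)"
  unfolding qE_def by (intro Cls_add Cls_mult Cls_minus Cls_uminus Cls_const Cls_id Cls_inv Cls_dq Cls_sq)

lemma Cls_qD: "Cls q \<Longrightarrow> Cls (qD q)"
  unfolding qD_def by (intro Cls_add Cls_mult Cls_minus Cls_uminus Cls_const Cls_id Cls_inv Cls_dq Cls_sq)

lemma qG_1: "qG a t n q 1 = (a - t) * (n - a - t) * q 1"
  unfolding qG_def by (simp add: algebra_simps)

lemma qE_1: "qE a n q 1 = 0" unfolding qE_def by simp
lemma qD_1: "qD q 1 = 0" unfolding qD_def by simp

lemma algG:
  fixes L w r R q q1 q2 a t n :: real and N :: nat
  assumes "L = 2 / w" "w \<noteq> 0" "r \<noteq> 0" "real N = n + 1"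
  shows "- (1 / L ^ N) * ((real N - 2) * r * L ^ N / L * (R * (q1 - 2 * a * q / w))
       + L ^ N * (1 / L\<^sup>2) * (R * (q2 - 4 * a * q1 / w + 4 * a\<^sup>2 * q / w\<^sup>2 - 4 * a * r * q / w\<^sup>2)
       + R * (q1 - 2 * a * q / w) * (real N - 1) / r)) - t * (n - t) * (R * q)
     = R * (- (w * w * (1/4) * q2 + ((n - 1) * w * r * (1/2) + n * w * w * (1/4) * (1 / r) - a * w) * q1
      + (a * a - a * r - a * (n - 1) * r - a * n * w * (1/2) * (1 / r)) * q) - t * (n - t) * q)"
proof -
  have L: "L \<noteq> 0" "L ^ N \<noteq> 0" using assms by auto
  show ?thesis using assms(2,3,4) L unfolding assms(1)
    by (simp add: field_simps power2_eq_square)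
qed

lemma algE:
  fixes L w r R q q1 a n :: real and N :: nat
  assumes "L = 2 / w" "w \<noteq> 0" "r \<noteq> 0" "real N = n + 1"
  shows "- (1 / L ^ N) * ((real N - 2) * r * L ^ N / L * (R * q) / r + 2 * (L ^ N * (1 / L\<^sup>2)) * (R * (q1 - 2 * a * q / w)) / r)
     = R * (- (w * w * (1/2) * (1 / r) * q1 - a * w * (1 / r) * q + (n - 1) * w * (1/2) * q))"
proof -
  have L: "L \<noteq> 0" "L ^ N \<noteq> 0" using assms by auto
  show ?thesis using assms(2,3,4) L unfolding assms(1)
    by (simp add: field_simps power2_eq_square)
qed

lemma algD:
  fixes L w R q :: real and N :: nat
  assumes "L = 2 / w" "w \<noteq> 0"
  shows "- (1 / L ^ N) * (L ^ N * (1 / L\<^sup>2) * (R * q)) = R * (- (w * w * (1/4) * q))"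
proof -
  have L: "L \<noteq> 0" "L ^ N \<noteq> 0" using assms by auto
  show ?thesis using assms(2) L unfolding assms(1)
    by (simp add: field_simps power2_eq_square)
qed


lemma coefG:
  assumes "0 < r" "r < 1" "real N = n + 1"
  shows "- (1 / lam r ^ N) * (Psi1 N r * phi1 a q r + Psi N r * (phi2 a q r + phi1 a q r * (real N - 1) / r))
      - t * (n - t) * phi a q r = phi a (qG a t n q) r"
proof -
  have w: "1 - r\<^sup>2 \<noteq> 0" using w_pos[OF assms(1,2)] by simp
  show ?thesis unfolding Psi1_def Psi_def phi_def phi1_def phi2_def qG_def
    by (rule algG[OF lam_def w _ assms(3)]) (use assms in simp)
qed

lemma coefE:
  assumes "0 < r" "r < 1" "real N = n + 1"
  shows "- (1 / lam r ^ N) * (Psi1 N r * phi a q r / r + 2 * Psi N r * phi1 a q r / r) = phi a (qE a n q) r"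
proof -
  have w: "1 - r\<^sup>2 \<noteq> 0" using w_pos[OF assms(1,2)] by simp
  show ?thesis unfolding Psi1_def Psi_def phi_def phi1_def qE_def
    by (rule algE[OF lam_def w _ assms(3)]) (use assms in simp)
qed

lemma coefD:
  assumes "0 < r" "r < 1"
  shows "- (1 / lam r ^ N) * (Psi N r * phi a q r) = phi a (qD q) r"
proof -
  have w: "1 - r\<^sup>2 \<noteq> 0" using w_pos[OF assms(1,2)] by simp
  show ?thesis unfolding Psi_def phi_def qD_def
    by (rule algD[OF lam_def w])
qed

definition Eop :: "('a::euclidean_space \<Rightarrow> real) \<Rightarrow> 'a \<Rightarrow> real" where
  "Eop G y = (\<Sum>b\<in>Basis. (y \<bullet> b) * partial_dir b G y)"

definition Lap :: "('a::euclidean_space \<Rightarrow> real) \<Rightarrow> 'a \<Rightarrow> real" where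
  "Lap G y = (\<Sum>b\<in>Basis. partial_dir b (partial_dir b G) y)"

definition bl :: "'a::euclidean_space list" where
  "bl = (SOME xs. set xs = Basis \<and> distinct xs)"

lemma bl: "set (bl :: 'a::euclidean_space list) = Basis" "distinct (bl :: 'a list)"
  using someI_ex[OF finite_distinct_list[OF finite_Basis]] unfolding bl_def by auto

lemma sum_Basis_list: "(\<Sum>b\<in>Basis. f b) = (\<Sum>b\<leftarrow>(bl::'a::euclidean_space list). f b)"
proof -
  have "sum f (set bl) = sum_list (map f bl)" by (rule sum.distinct_set_conv_list[OF bl(2)])
  then show ?thesis by (simp add: bl(1))
qed

lemma sm_Eop:
  assumes "smooth_on (- {0}) G"
  shows "smooth_on (- {0}) (Eop G)"
proof -
  have "Eop G = sprod (map (\<lambda>b. (\<lambda>y. y \<bullet> b, partial_dir b G)) bl)"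
    by (auto simp: Eop_def sprod_def[abs_def] sum_Basis_list o_def)
  moreover have "smooth_on (- {0}) (sprod (map (\<lambda>b. (\<lambda>y. y \<bullet> b, partial_dir b G)) bl))"
    by (rule sm_sprod) (use assms bl(1) in \<open>auto intro: sm_inner sm_partial\<close>)
  ultimately show ?thesis by simp
qed

lemma sm_Lap:
  assumes "smooth_on (- {0}) G"
  shows "smooth_on (- {0}) (Lap G)"
proof -
  have "Lap G = sprod (map (\<lambda>b. (\<lambda>y. 1, partial_dir b (partial_dir b G))) bl)"
    by (auto simp: Lap_def sprod_def[abs_def] sum_Basis_list o_def)
  moreover have "smooth_on (- {0}) (sprod (map (\<lambda>b. (\<lambda>y. 1, partial_dir b (partial_dir b G))) bl))"
    by (rule sm_sprod) (use assms bl(1) in \<open>auto intro: sm_const sm_partial\<close>)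
  ultimately show ?thesis by simp
qed

lemma norm_line_deriv:
  fixes y b :: "'a::euclidean_space"
  assumes "y \<noteq> 0"
  shows "((\<lambda>t. norm (y + t *\<^sub>R b)) has_real_derivative (y \<bullet> b) / norm y) (at 0)"
proof -
  have h1: "((\<lambda>t::real. y + t *\<^sub>R b) has_derivative (\<lambda>t. t *\<^sub>R b)) (at 0)"
    by (auto intro!: derivative_eq_intros)
  have h2: "(norm has_derivative (\<lambda>h. h \<bullet> sgn y)) (at (y + 0 *\<^sub>R b))"
    using has_derivative_norm[OF assms] by simp
  have "((\<lambda>t. norm (y + t *\<^sub>R b)) has_derivative (\<lambda>t. (t *\<^sub>R b) \<bullet> sgn y)) (at 0)"
    using has_derivative_compose[OF h1 h2] by simp
  moreover have "(\<lambda>t. (t *\<^sub>R b) \<bullet> sgn y) = (*) ((y \<bullet> b) / norm y)"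
    by (auto simp: sgn_div_norm inner_commute field_simps)
  ultimately show ?thesis unfolding has_field_derivative_def by simp
qed

lemma DERIV_chain_at:
  "(f has_real_derivative Da) (at r) \<Longrightarrow> (g has_real_derivative Db) (at x) \<Longrightarrow> g x = r \<Longrightarrow>
    ((\<lambda>x. f (g x)) has_real_derivative Da * Db) (at x)"
proof -
  assume a: "(f has_real_derivative Da) (at r)" "(g has_real_derivative Db) (at x)" "g x = r"
  from a(1) a(3) have "(f has_real_derivative Da) (at (g x))" by simp
  from DERIV_chain2[OF this a(2)] show ?thesis .
qed

definition Aset :: "'a::euclidean_space set" where "Aset = ball 0 1 - {0}"

lemma Aset_open: "open Aset" unfolding Aset_def by auto

lemma Aset_norm: "y \<in> Aset \<Longrightarrow> 0 < norm y \<and> norm y < 1" unfolding Aset_def by auto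

lemma Aset_sub: "y \<in> Aset \<Longrightarrow> y \<in> - {0}" unfolding Aset_def by auto

definition D1 :: "real \<Rightarrow> (real \<Rightarrow> real) \<Rightarrow> ('a::euclidean_space \<Rightarrow> real) \<Rightarrow> 'a \<Rightarrow> 'a \<Rightarrow> real" where
  "D1 a q G b y = phi1 a q (norm y) * (y \<bullet> b) / norm y * G y + phi a q (norm y) * partial_dir b G y"

lemma D1_deriv:
  assumes "y \<in> Aset" "b \<in> Basis" "Cls q" "smooth_on (- {0}) G"
  shows "((\<lambda>s. phi a q (norm (y + s *\<^sub>R b)) * G (y + s *\<^sub>R b)) has_real_derivative D1 a q G b y) (at 0)"
proof -
  have r: "0 < norm y" "norm y < 1" using Aset_norm[OF assms(1)] by auto
  have y0: "y \<noteq> 0" using r by auto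
  have d1: "((\<lambda>s. phi a q (norm (y + s *\<^sub>R b))) has_real_derivative phi1 a q (norm y) * ((y \<bullet> b) / norm y)) (at 0)"
    by (rule DERIV_chain_at[OF phi_deriv[OF assms(3) r] norm_line_deriv[OF y0]]) simp
  have d2: "((\<lambda>s. G (y + s *\<^sub>R b)) has_real_derivative partial_dir b G y) (at 0)"
    by (rule sm_line_deriv[OF assms(4) Aset_sub[OF assms(1)] assms(2)])
  show ?thesis
    by (rule DERIV_eq[OF DERIV_mult[OF d1 d2]]) (simp add: D1_def algebra_simps)
qed

definition D2 :: "nat \<Rightarrow> real \<Rightarrow> (real \<Rightarrow> real) \<Rightarrow> ('a::euclidean_space \<Rightarrow> real) \<Rightarrow> 'a \<Rightarrow> 'a \<Rightarrow> real" where
  "D2 N a q G b x = (let r = norm x; xb = x \<bullet> b; Gb = partial_dir b G x; Gbb = partial_dir b (partial_dir b G) x in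
     Psi1 N r * (xb / r) * (phi1 a q r * xb / r * G x + phi a q r * Gb)
     + Psi N r * (phi2 a q r * (xb / r) * xb / r * G x + phi1 a q r * (1 / r - xb * xb / (r * r * r)) * G x
        + 2 * phi1 a q r * (xb / r) * Gb + phi a q r * Gbb))"

lemma alg_d2:
  fixes r xb P1 P f f1 f2 g gb gbb :: real
  assumes "r \<noteq> 0"
  shows "(P1 * (xb / r)) * (f1 * xb / r * g + f * gb) + ((((f2 * (xb / r)) * xb + 1 * f1) * r - f1 * xb * (xb / r)) / (r * r) * g
      + gb * (f1 * xb / r) + (f1 * (xb / r) * gb + gbb * f)) * P
   = P1 * (xb / r) * (f1 * xb / r * g + f * gb) + P * (f2 * (xb / r) * xb / r * g + f1 * (1 / r - xb * xb / (r * r * r)) * g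
        + 2 * f1 * (xb / r) * gb + f * gbb)"
  using assms by (simp add: field_simps)

lemma D2_deriv:
  assumes "x \<in> Aset" "b \<in> Basis" "Cls q" "smooth_on (- {0}) G" "N \<ge> 1"
  shows "((\<lambda>t. Psi N (norm (x + t *\<^sub>R b)) * D1 a q G b (x + t *\<^sub>R b)) has_real_derivative D2 N a q G b x) (at 0)"
proof -
  have r: "0 < norm x" "norm x < 1" using Aset_norm[OF assms(1)] by auto
  have x0: "x \<noteq> 0" using r by auto
  have bb: "b \<bullet> b = 1" using assms(2) by simp
  have dR: "((\<lambda>t. norm (x + t *\<^sub>R b)) has_real_derivative (x \<bullet> b) / norm x) (at 0)"
    by (rule norm_line_deriv[OF x0])
  have dPsi: "((\<lambda>t. Psi N (norm (x + t *\<^sub>R b))) has_real_derivative Psi1 N (norm x) * ((x \<bullet> b) / norm x)) (at 0)"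
    by (rule DERIV_chain_at[OF Psi_deriv[OF r assms(5)] dR]) simp
  have dphi: "((\<lambda>t. phi a q (norm (x + t *\<^sub>R b))) has_real_derivative phi1 a q (norm x) * ((x \<bullet> b) / norm x)) (at 0)"
    by (rule DERIV_chain_at[OF phi_deriv[OF assms(3) r] dR]) simp
  have dphi1: "((\<lambda>t. phi1 a q (norm (x + t *\<^sub>R b))) has_real_derivative phi2 a q (norm x) * ((x \<bullet> b) / norm x)) (at 0)"
    by (rule DERIV_chain_at[OF phi1_deriv[OF assms(3) r] dR]) simp
  have dP: "((\<lambda>t. (x + t *\<^sub>R b) \<bullet> b) has_real_derivative 1) (at 0)"
    unfolding inner_add_left inner_scaleR_left bb by (auto intro!: derivative_eq_intros)
  have dG: "((\<lambda>t. G (x + t *\<^sub>R b)) has_real_derivative partial_dir b G x) (at 0)"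
    by (rule sm_line_deriv[OF assms(4) Aset_sub[OF assms(1)] assms(2)])
  have dGb: "((\<lambda>t. partial_dir b G (x + t *\<^sub>R b)) has_real_derivative partial_dir b (partial_dir b G) x) (at 0)"
    by (rule sm_line_deriv[OF sm_partial[OF assms(4,2)] Aset_sub[OF assms(1)] assms(2)])
  have nz: "norm (x + 0 *\<^sub>R b) \<noteq> 0" using x0 by simp
  have nz': "norm x \<noteq> 0" using x0 by simp
  have "((\<lambda>t. Psi N (norm (x + t *\<^sub>R b)) * (phi1 a q (norm (x + t *\<^sub>R b)) * ((x + t *\<^sub>R b) \<bullet> b) / norm (x + t *\<^sub>R b) * G (x + t *\<^sub>R b)
        + phi a q (norm (x + t *\<^sub>R b)) * partial_dir b G (x + t *\<^sub>R b))) has_real_derivative D2 N a q G b x) (at 0)"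
    apply (rule DERIV_eq[OF DERIV_mult[OF dPsi DERIV_add[OF DERIV_mult[OF DERIV_divide[OF DERIV_mult[OF dphi1 dP] dR nz] dG] DERIV_mult[OF dphi dGb]]]])
    apply (simp only: scaleR_zero_left add_0_right)
    unfolding D2_def Let_def by (rule alg_d2[OF nz'])
  then show ?thesis unfolding D1_def .
qed

lemma sum_inner_sq: "(\<Sum>b\<in>Basis. (x \<bullet> b) * (x \<bullet> b)) = norm x * norm x"
proof -
  have "(\<Sum>b\<in>Basis. (x \<bullet> b) * (x \<bullet> b)) = x \<bullet> x" by (rule euclidean_inner[symmetric])
  also have "\<dots> = norm x * norm x" by (simp add: power2_norm_eq_inner[symmetric] power2_eq_square)
  finally show ?thesis .
qed

lemma alg_e:
  fixes r xb P1 P f f1 f2 g gb gbb :: real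
  assumes "r \<noteq> 0"
  shows "P1 * (xb / r) * (f1 * xb / r * g + f * gb) + P * (f2 * (xb / r) * xb / r * g + f1 * (1 / r - xb * xb / (r * r * r)) * g
        + 2 * f1 * (xb / r) * gb + f * gbb)
   = (P1 * f1 / (r * r) + P * f2 / (r * r) - P * f1 / (r * r * r)) * (xb * xb) * g + (P1 * f / r + 2 * P * f1 / r) * (xb * gb)
     + (P * f1 / r) * g + (P * f) * gbb"
  using assms by (simp add: field_simps)

lemma alg_f:
  fixes r P1 P f f1 f2 g e l n :: real
  assumes "r \<noteq> 0"
  shows "(P1 * f1 / (r * r) + P * f2 / (r * r) - P * f1 / (r * r * r)) * (r * r) * g + (P1 * f / r + 2 * P * f1 / r) * e
     + n * (P * f1 / r) * g + (P * f) * l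
   = (P1 * f1 + P * (f2 + f1 * (n - 1) / r)) * g + (P1 * f / r + 2 * P * f1 / r) * e + (P * f) * l"
  using assms by (simp add: field_simps)

lemma D2_sum:
  fixes x :: "'a::euclidean_space"
  assumes "x \<noteq> 0" "DIM('a) = N"
  shows "(\<Sum>b\<in>Basis. D2 N a q G b x) =
     (Psi1 N (norm x) * phi1 a q (norm x) + Psi N (norm x) * (phi2 a q (norm x) + phi1 a q (norm x) * (real N - 1) / norm x)) * G x
   + (Psi1 N (norm x) * phi a q (norm x) / norm x + 2 * Psi N (norm x) * phi1 a q (norm x) / norm x) * Eop G x
   + (Psi N (norm x) * phi a q (norm x)) * Lap G x"
proof -
  define r where "r = norm x"
  have r0: "r \<noteq> 0" using assms r_def by auto
  define c1 where "c1 = Psi1 N r * phi1 a q r / (r * r) + Psi N r * phi2 a q r / (r * r) - Psi N r * phi1 a q r / (r * r * r)"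
  define c2 where "c2 = Psi1 N r * phi a q r / r + 2 * Psi N r * phi1 a q r / r"
  define c3 where "c3 = Psi N r * phi1 a q r / r"
  define c4 where "c4 = Psi N r * phi a q r"
  have e: "D2 N a q G b x = c1 * ((x \<bullet> b) * (x \<bullet> b)) * G x + c2 * ((x \<bullet> b) * partial_dir b G x) + c3 * G x
      + c4 * partial_dir b (partial_dir b G) x" for b
    unfolding D2_def Let_def c1_def c2_def c3_def c4_def r_def[symmetric] by (rule alg_e[OF r0])
  have "(\<Sum>b\<in>Basis. D2 N a q G b x) = c1 * (\<Sum>b\<in>Basis. (x \<bullet> b) * (x \<bullet> b)) * G x + c2 * Eop G x
      + real N * c3 * G x + c4 * Lap G x"
  proof -
    have s1: "(\<Sum>b\<in>Basis. c1 * ((x \<bullet> b) * (x \<bullet> b)) * G x) = c1 * (\<Sum>b\<in>Basis. (x \<bullet> b) * (x \<bullet> b)) * G x"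
      by (simp add: sum_distrib_left sum_distrib_right)
    have s2: "(\<Sum>b\<in>Basis. c2 * ((x \<bullet> b) * partial_dir b G x)) = c2 * Eop G x"
      unfolding Eop_def by (simp add: sum_distrib_left)
    have s3: "(\<Sum>b\<in>(Basis::'a set). c3 * G x) = real N * c3 * G x"
      using assms(2) by simp
    have s4: "(\<Sum>b\<in>Basis. c4 * partial_dir b (partial_dir b G) x) = c4 * Lap G x"
      unfolding Lap_def by (simp add: sum_distrib_left)
    show ?thesis unfolding e sum.distrib s1 s2 s3 s4 ..
  qed
  also have "\<dots> = c1 * (r * r) * G x + c2 * Eop G x + real N * c3 * G x + c4 * Lap G x"
    unfolding sum_inner_sq r_def ..
  finally have S: "(\<Sum>b\<in>Basis. D2 N a q G b x) = c1 * (r * r) * G x + c2 * Eop G x + real N * c3 * G x + c4 * Lap G x" .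
  show ?thesis unfolding S c1_def c2_def c3_def c4_def r_def[symmetric] by (rule alg_f[OF r0])
qed

definition ulist :: "real \<Rightarrow> ((real \<Rightarrow> real) \<times> ('a::euclidean_space \<Rightarrow> real)) list \<Rightarrow> 'a \<Rightarrow> real" where
  "ulist a L y = (\<Sum>(q,G)\<leftarrow>L. phi a q (norm y) * G y)"

definition GoodL :: "real \<Rightarrow> ('a::euclidean_space \<Rightarrow> real) \<Rightarrow> ((real \<Rightarrow> real) \<times> ('a \<Rightarrow> real)) list \<Rightarrow> bool" where
  "GoodL a u L \<longleftrightarrow> (\<forall>y\<in>Aset. u y = ulist a L y) \<and> (\<forall>(q,G)\<in>set L. Cls q \<and> smooth_on (- {0}) G)"

definition Tl :: "real \<Rightarrow> real \<Rightarrow> real \<Rightarrow> (real \<Rightarrow> real) \<times> ('a::euclidean_space \<Rightarrow> real)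
    \<Rightarrow> ((real \<Rightarrow> real) \<times> ('a \<Rightarrow> real)) list" where
  "Tl a t n p = (case p of (q, G) \<Rightarrow> [(qG a t n q, G), (qE a n q, Eop G), (qD q, Lap G)])"

lemma DERIV_ulist:
  assumes "y \<in> Aset" "b \<in> Basis" "\<forall>(q,G)\<in>set L. Cls q \<and> smooth_on (- {0}) G"
  shows "((\<lambda>s. ulist a L (y + s *\<^sub>R b)) has_real_derivative (\<Sum>(q,G)\<leftarrow>L. D1 a q G b y)) (at 0)"
  using assms(3)
proof (induction L)
  case Nil then show ?case by (simp add: ulist_def)
next
  case (Cons p L)
  obtain q G where p: "p = (q, G)" by fastforce
  have c: "Cls q" "smooth_on (- {0}) G" using Cons.prems p by auto
  have IH: "((\<lambda>s. ulist a L (y + s *\<^sub>R b)) has_real_derivative (\<Sum>(q,G)\<leftarrow>L. D1 a q G b y)) (at 0)"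
    using Cons by auto
  show ?case using DERIV_add[OF D1_deriv[OF assms(1,2) c] IH] by (simp add: p ulist_def)
qed

lemma DERIV_Psi_list:
  assumes "x \<in> Aset" "b \<in> Basis" "\<forall>(q,G)\<in>set L. Cls q \<and> smooth_on (- {0}) G" "N \<ge> 1"
  shows "((\<lambda>t. Psi N (norm (x + t *\<^sub>R b)) * (\<Sum>(q,G)\<leftarrow>L. D1 a q G b (x + t *\<^sub>R b)))
     has_real_derivative (\<Sum>(q,G)\<leftarrow>L. D2 N a q G b x)) (at 0)"
  using assms(3)
proof (induction L)
  case Nil then show ?case by simp
next
  case (Cons p L)
  obtain q G where p: "p = (q, G)" by fastforce
  have c: "Cls q" "smooth_on (- {0}) G" using Cons.prems p by auto
  have IH: "((\<lambda>t. Psi N (norm (x + t *\<^sub>R b)) * (\<Sum>(q,G)\<leftarrow>L. D1 a q G b (x + t *\<^sub>R b)))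
     has_real_derivative (\<Sum>(q,G)\<leftarrow>L. D2 N a q G b x)) (at 0)"
    using Cons by auto
  have "((\<lambda>t. Psi N (norm (x + t *\<^sub>R b)) * D1 a q G b (x + t *\<^sub>R b) +
       Psi N (norm (x + t *\<^sub>R b)) * (\<Sum>(q,G)\<leftarrow>L. D1 a q G b (x + t *\<^sub>R b)))
     has_real_derivative D2 N a q G b x + (\<Sum>(q,G)\<leftarrow>L. D2 N a q G b x)) (at 0)"
    by (rule DERIV_add[OF D2_deriv[OF assms(1,2) c assms(4)] IH])
  then show ?case by (simp add: p distrib_left)
qed

lemma lamB_lam: "lamB y = lam (norm y)"
  by (simp add: lamB_def lam_def)

lemma sum_swap_list:
  "(\<Sum>b\<in>B. (\<Sum>(q,G)\<leftarrow>L. f q G b)) = (\<Sum>(q,G)\<leftarrow>L. (\<Sum>b\<in>B. f q G b))"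
  by (induction L) (auto simp: sum.distrib)

lemma step:
  fixes u :: "'a::euclidean_space \<Rightarrow> real"
  assumes "GoodL a u L" "DIM('a) = n + 1"
  shows "GoodL a (Dop n t u) (concat (map (Tl a t (real n)) L))"
proof -
  define N where "N = DIM('a)"
  have N1: "N \<ge> 1" unfolding N_def by (simp add: DIM_positive Suc_leI)
  have RN: "real N = real n + 1" unfolding N_def assms(2) by simp
  have eq: "\<forall>y\<in>Aset. u y = ulist a L y" and sc: "\<forall>(q,G)\<in>set L. Cls q \<and> smooth_on (- {0}) G"
    using assms(1) unfolding GoodL_def by auto
  have pd1: "partial_dir b u y = (\<Sum>(q,G)\<leftarrow>L. D1 a q G b y)" if y: "y \<in> Aset" and b: "b \<in> Basis" for y b
  proof -
    have ev: "\<forall>\<^sub>F s in nhds 0. ulist a L (y + s *\<^sub>R b) = u (y + s *\<^sub>R b)"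
      using ev_line[OF Aset_open y, of b] eq by (auto elim: eventually_mono)
    have "((\<lambda>s. u (y + s *\<^sub>R b)) has_real_derivative (\<Sum>(q,G)\<leftarrow>L. D1 a q G b y)) (at 0)"
      using DERIV_cong_ev[OF refl ev refl] DERIV_ulist[OF y b sc] by blast
    then show ?thesis unfolding partial_dir_def by (rule DERIV_imp_deriv)
  qed
  have pd2: "partial_dir b (\<lambda>y. lamB y ^ N * (1 / (lamB y)\<^sup>2) * partial_dir b u y) x
      = (\<Sum>(q,G)\<leftarrow>L. D2 N a q G b x)" if x: "x \<in> Aset" and b: "b \<in> Basis" for x b
  proof -
    have "partial_dir b (\<lambda>y. lamB y ^ N * (1 / (lamB y)\<^sup>2) * partial_dir b u y) x
        = partial_dir b (\<lambda>y. Psi N (norm y) * (\<Sum>(q,G)\<leftarrow>L. D1 a q G b y)) x"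
      by (rule pd_cong[OF Aset_open _ x]) (auto simp: pd1 b lamB_lam Psi_def)
    also have "\<dots> = (\<Sum>(q,G)\<leftarrow>L. D2 N a q G b x)"
      unfolding partial_dir_def using DERIV_Psi_list[OF x b sc N1] by (rule DERIV_imp_deriv)
    finally show ?thesis .
  qed
  show ?thesis
    unfolding GoodL_def
  proof (intro conjI)
    show "\<forall>x\<in>Aset. Dop n t u x = ulist a (concat (map (Tl a t (real n)) L)) x"
    proof
    fix x :: 'a assume x: "x \<in> Aset"
    have r: "0 < norm x" "norm x < 1" using Aset_norm[OF x] by auto
    have x0: "x \<noteq> 0" using r by auto
    have "LB u x = (1 / lam (norm x) ^ N) * (\<Sum>b\<in>Basis. (\<Sum>(q,G)\<leftarrow>L. D2 N a q G b x))"
      unfolding LB_def N_def[symmetric] lamB_lam[of x] using pd2[OF x] by simp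
    also have "\<dots> = (\<Sum>(q,G)\<leftarrow>L. (1 / lam (norm x) ^ N) * (\<Sum>b\<in>Basis. D2 N a q G b x))"
      unfolding sum_swap_list by (induction L) (auto simp: distrib_left)
    finally have LB: "LB u x = (\<Sum>(q,G)\<leftarrow>L. (1 / lam (norm x) ^ N) * (\<Sum>b\<in>Basis. D2 N a q G b x))" .
    have trm: "- ((1 / lam (norm x) ^ N) * (\<Sum>b\<in>Basis. D2 N a q G b x)) - t * (real n - t) * (phi a q (norm x) * G x)
       = phi a (qG a t n q) (norm x) * G x + phi a (qE a n q) (norm x) * Eop G x + phi a (qD q) (norm x) * Lap G x"
      for q G
    proof -
      note S = D2_sum[OF x0 N_def[symmetric], of a q G]
      have "- ((1 / lam (norm x) ^ N) * (\<Sum>b\<in>Basis. D2 N a q G b x)) - t * (real n - t) * (phi a q (norm x) * G x)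
         = (- (1 / lam (norm x) ^ N) * (Psi1 N (norm x) * phi1 a q (norm x) + Psi N (norm x) * (phi2 a q (norm x) + phi1 a q (norm x) * (real N - 1) / norm x))
             - t * (real n - t) * phi a q (norm x)) * G x
           + (- (1 / lam (norm x) ^ N) * (Psi1 N (norm x) * phi a q (norm x) / norm x + 2 * Psi N (norm x) * phi1 a q (norm x) / norm x)) * Eop G x
           + (- (1 / lam (norm x) ^ N) * (Psi N (norm x) * phi a q (norm x))) * Lap G x"
        unfolding S by (simp add: algebra_simps diff_divide_distrib add_divide_distrib)
      also have "\<dots> = phi a (qG a t n q) (norm x) * G x + phi a (qE a n q) (norm x) * Eop G x + phi a (qD q) (norm x) * Lap G x"
        unfolding coefG[OF r RN] coefE[OF r RN] coefD[OF r] ..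
      finally show ?thesis .
    qed
    have "Dop n t u x = - LB u x - t * (real n - t) * ulist a L x"
      unfolding Dop_def using eq x by simp
    also have "\<dots> = (\<Sum>(q,G)\<leftarrow>L. - ((1 / lam (norm x) ^ N) * (\<Sum>b\<in>Basis. D2 N a q G b x)) - t * (real n - t) * (phi a q (norm x) * G x))"
      unfolding LB ulist_def
      by (induction L) (auto simp: algebra_simps)
    also have "\<dots> = (\<Sum>(q,G)\<leftarrow>L. phi a (qG a t n q) (norm x) * G x + phi a (qE a n q) (norm x) * Eop G x + phi a (qD q) (norm x) * Lap G x)"
      unfolding trm ..
    also have "\<dots> = ulist a (concat (map (Tl a t (real n)) L)) x"
      unfolding ulist_def
      by (induction L) (auto simp: Tl_def)
    finally show "Dop n t u x = ulist a (concat (map (Tl a t (real n)) L)) x" .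
    qed
  next
    show "\<forall>(q,G)\<in>set (concat (map (Tl a t (real n)) L)). Cls q \<and> smooth_on (- {0}) G"
      using sc by (auto simp: Tl_def Cls_qG Cls_qE Cls_qD sm_Eop sm_Lap)
  qed
qed

lemma lim_q:
  assumes "Cls q" "norm (\<theta>::'a::euclidean_space) = 1"
  shows "((\<lambda>x. q (norm x)) \<longlongrightarrow> q 1) (at \<theta> within S)"
proof -
  have "((\<lambda>x. norm x) \<longlongrightarrow> norm \<theta>) (at \<theta> within S)" by (intro tendsto_intros)
  then have "((\<lambda>x. norm x) \<longlongrightarrow> 1) (at \<theta> within S)" using assms(2) by simp
  from isCont_tendsto_compose[OF Cls_isCont[OF assms(1), of 1] this] show ?thesis by simp
qed

lemma lim_G:
  assumes "smooth_on (- {0}) G" "(\<theta>::'a::euclidean_space) \<noteq> 0"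
  shows "(G \<longlongrightarrow> G \<theta>) (at \<theta> within S)"
proof -
  have "continuous_on (- {0}) G" by (rule sm_cont[OF assms(1)])
  then have "isCont G \<theta>" using continuous_on_eq_continuous_at[of "- {0}" G] assms(2) by auto
  then have "(G \<longlongrightarrow> G \<theta>) (at \<theta>)" by (simp add: isCont_def)
  then show ?thesis by (rule tendsto_mono[OF at_le[OF subset_UNIV]])
qed

lemma lim_list:
  assumes "\<forall>(q,G)\<in>set L. Cls q \<and> smooth_on (- {0}) G" "norm (\<theta>::'a::euclidean_space) = 1"
  shows "((\<lambda>x. \<Sum>(q,G)\<leftarrow>L. q (norm x) * G x) \<longlongrightarrow> (\<Sum>(q,G)\<leftarrow>L. q 1 * G \<theta>)) (at \<theta> within S)"
  using assms(1)
proof (induction L)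
  case Nil then show ?case by simp
next
  case (Cons p L)
  obtain q G where p: "p = (q, G)" by fastforce
  have c: "Cls q" "smooth_on (- {0}) G" using Cons.prems p by auto
  have t0: "\<theta> \<noteq> 0" using assms(2) by auto
  have "((\<lambda>x. q (norm x) * G x + (\<Sum>(q,G)\<leftarrow>L. q (norm x) * G x)) \<longlongrightarrow> q 1 * G \<theta> + (\<Sum>(q,G)\<leftarrow>L. q 1 * G \<theta>)) (at \<theta> within S)"
    by (intro tendsto_add tendsto_mult lim_q[OF c(1) assms(2)] lim_G[OF c(2) t0]) (use Cons in auto)
  then show ?case by (simp add: p)
qed

definition Inv :: "real \<Rightarrow> ('a::euclidean_space \<Rightarrow> real) \<Rightarrow> ('a \<Rightarrow> real) \<Rightarrow> real \<Rightarrow> bool" where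
  "Inv a u F c \<longleftrightarrow> (\<exists>q0 Lr. GoodL a u ((q0, F) # Lr) \<and> q0 1 = c \<and> (\<forall>(q,G)\<in>set Lr. q 1 = 0))"

lemma Inv_step:
  fixes u :: "'a::euclidean_space \<Rightarrow> real"
  assumes "Inv a u F c" "DIM('a) = n + 1"
  shows "Inv a (Dop n t u) F ((a - t) * (real n - a - t) * c)"
proof -
  obtain q0 Lr where G: "GoodL a u ((q0, F) # Lr)" and c: "q0 1 = c" and z: "\<forall>(q,G)\<in>set Lr. q 1 = 0"
    using assms(1) unfolding Inv_def by blast
  have S: "GoodL a (Dop n t u) (concat (map (Tl a t (real n)) ((q0, F) # Lr)))" by (rule step[OF G assms(2)])
  have e: "concat (map (Tl a t (real n)) ((q0, F) # Lr)) =
      (qG a t n q0, F) # ((qE a n q0, Eop F) # (qD q0, Lap F) # concat (map (Tl a t (real n)) Lr))"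
    by (simp add: Tl_def)
  show ?thesis unfolding Inv_def
  proof (intro exI conjI)
    show "GoodL a (Dop n t u) ((qG a t n q0, F) # ((qE a n q0, Eop F) # (qD q0, Lap F) # concat (map (Tl a t (real n)) Lr)))"
      using S unfolding e .
    show "qG a t n q0 1 = (a - t) * (real n - a - t) * c" using c by (simp add: qG_1)
    show "\<forall>(q,G)\<in>set ((qE a n q0, Eop F) # (qD q0, Lap F) # concat (map (Tl a t (real n)) Lr)). q 1 = 0"
      using z by (auto simp: qE_1 qD_1 qG_1 Tl_def)
  qed
qed

lemma Inv_prod:
  fixes u :: "'a::euclidean_space \<Rightarrow> real"
  assumes "Inv a u F c" "DIM('a) = n + 1"
  shows "Inv a (Dprod n ts u) F (c * prod_list (map (\<lambda>t. (a - t) * (real n - a - t)) ts))"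
proof (induction ts)
  case Nil then show ?case using assms(1) by (simp add: Dprod_def)
next
  case (Cons t ts)
  have "Dprod n (t # ts) u = Dop n t (Dprod n ts u)" by (simp add: Dprod_def)
  then show ?case using Inv_step[OF Cons assms(2), of t] by (simp add: mult_ac)
qed

lemma Inv_base:
  assumes "smooth_on (- {0}) F" "\<forall>y\<in>Aset. V y = rho (norm y) powr a * F y"
  shows "Inv a V F 1"
  unfolding Inv_def GoodL_def
  by (intro exI[of _ "\<lambda>r. 1"] exI[of _ "[]"]) (use assms in \<open>auto simp: ulist_def phi_def\<close>)

lemma ev_Aset:
  assumes "norm (\<theta>::'a::euclidean_space) = 1"
  shows "\<forall>\<^sub>F x in at \<theta> within ball 0 1. x \<in> Aset"
  unfolding eventually_at
proof (intro exI[of _ 1] conjI ballI impI)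
  fix x assume x: "x \<in> ball (0::'a) 1" "x \<noteq> \<theta> \<and> dist x \<theta> < 1"
  have "x \<noteq> 0" using x assms by (auto simp: dist_norm)
  then show "x \<in> Aset" using x unfolding Aset_def by auto
qed simp

lemma rhoB_rho: "rhoB x = rho (norm x)" by (simp add: rhoB_def rho_def)

lemma Inv_lim:
  fixes u :: "'a::euclidean_space \<Rightarrow> real"
  assumes "Inv a' u F c" "a' = a + 2 * real k" "p = - a" "norm \<theta> = 1"
  shows "((\<lambda>x. rhoB x powr p * u x) \<longlongrightarrow> (if k = 0 then c * F \<theta> else 0)) (at \<theta> within ball 0 1)"
proof -
  obtain q0 Lr where G: "GoodL a' u ((q0, F) # Lr)" and c: "q0 1 = c" and z: "\<forall>(q,G)\<in>set Lr. q 1 = 0"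
    using assms(1) unfolding Inv_def by blast
  define L where "L = (q0, F) # Lr"
  define Sx where "Sx = (\<lambda>x::'a. \<Sum>(q,G)\<leftarrow>L. q (norm x) * G x)"
  have eq: "\<forall>y\<in>Aset. u y = ulist a' L y" and sc: "\<forall>(q,G)\<in>set L. Cls q \<and> smooth_on (- {0}) G"
    using G unfolding GoodL_def L_def by auto
  have z0: "(\<Sum>(q,G)\<leftarrow>Lr. q 1 * G \<theta>) = 0" using z by (induction Lr) auto
  have limS: "(Sx \<longlongrightarrow> c * F \<theta>) (at \<theta> within ball 0 1)"
    using lim_list[OF sc assms(4)] unfolding Sx_def by (simp add: L_def c z0)
  have ev: "\<forall>\<^sub>F x in at \<theta> within ball 0 1. rho (norm x) powr (2 * real k) * Sx x = rhoB x powr p * u x"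
    using ev_Aset[OF assms(4)]
  proof (rule eventually_mono)
    fix x :: 'a assume x: "x \<in> Aset"
    have r: "0 < norm x" "norm x < 1" using Aset_norm[OF x] by auto
    have rp: "rho (norm x) > 0" by (rule rho_pos[OF r])
    have "ulist a' L x = rho (norm x) powr a' * Sx x"
      unfolding ulist_def Sx_def phi_def
      by (induction L) (auto simp: algebra_simps)
    then have "rhoB x powr p * u x = rho (norm x) powr (- a) * rho (norm x) powr (a + 2 * real k) * Sx x"
      using eq x assms(2,3) by (simp add: rhoB_rho)
    also have "\<dots> = rho (norm x) powr (2 * real k) * Sx x"
      by (simp add: powr_add[symmetric])
    finally show "rho (norm x) powr (2 * real k) * Sx x = rhoB x powr p * u x" by simp
  qed
  show ?thesis
  proof (cases "k = 0")
    case True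
    have ev2: "\<forall>\<^sub>F x in at \<theta> within ball 0 1. Sx x = rho (norm x) powr (2 * real k) * Sx x"
      using ev_Aset[OF assms(4)]
    proof (rule eventually_mono)
      fix x :: 'a assume x: "x \<in> Aset"
      have "rho (norm x) > 0" using Aset_norm[OF x] rho_pos by blast
      then show "Sx x = rho (norm x) powr (2 * real k) * Sx x" using True by simp
    qed
    show ?thesis using Lim_transform_eventually[OF Lim_transform_eventually[OF limS ev2] ev] True by simp
  next
    case False
    have lr: "((\<lambda>x. rho (norm x)) \<longlongrightarrow> rho 1) (at \<theta> within ball 0 1)"
    proof -
      have "((\<lambda>x. norm x) \<longlongrightarrow> 1) (at \<theta> within ball 0 1)"
        using assms(4) tendsto_norm[OF tendsto_ident_at, of \<theta> "ball 0 1"] by simp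
      moreover have "isCont rho 1" using DERIV_isCont[OF rho_deriv[of 1]] by simp
      ultimately show ?thesis using isCont_tendsto_compose by blast
    qed
    have r1: "rho 1 = 0" by (simp add: rho_def)
    have lr0: "((\<lambda>x. rho (norm x)) \<longlongrightarrow> 0) (at \<theta> within ball 0 1)" using lr unfolding r1 .
    have nn: "\<forall>\<^sub>F x in at \<theta> within ball 0 1. 0 \<le> rho (norm x)"
      using ev_Aset[OF assms(4)]
    proof (rule eventually_mono)
      fix x :: 'a assume x: "x \<in> Aset"
      have "rho (norm x) > 0" using Aset_norm[OF x] rho_pos by blast
      then show "0 \<le> rho (norm x)" by simp
    qed
    have "((\<lambda>x. rho (norm x) powr (2 * real k)) \<longlongrightarrow> 0) (at \<theta> within ball 0 1)"
      by (rule tendsto_zero_powrI[OF lr0 tendsto_const nn]) (use False in simp)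
    then have "((\<lambda>x. rho (norm x) powr (2 * real k) * Sx x) \<longlongrightarrow> 0 * (c * F \<theta>)) (at \<theta> within ball 0 1)"
      by (rule tendsto_mult[OF _ limS])
    then show ?thesis using Lim_transform_eventually[OF _ ev] False by simp
  qed
qed

lemma not_int:
  fixes \<gamma> :: real
  assumes "\<gamma> > 0" "\<gamma> \<notin> \<nat>"
  shows "\<gamma> \<noteq> of_int k"
proof
  assume g: "\<gamma> = of_int k"
  then have "k \<ge> 0" using assms(1) by simp
  then have "\<gamma> = of_nat (nat k)" using g by simp
  then show False using assms(2) by (metis of_nat_in_Nats)
qed

lemma floor_facts:
  assumes "\<gamma> > (0::real)"
  shows "2 * nat \<lfloor>\<gamma> / 2\<rfloor> \<le> nat \<lfloor>\<gamma>\<rfloor>" "nat \<lfloor>\<gamma>\<rfloor> \<le> 2 * nat \<lfloor>\<gamma> / 2\<rfloor> + 1"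
proof -
  have a: "of_int \<lfloor>\<gamma> / 2\<rfloor> \<le> \<gamma> / 2" "\<gamma> / 2 < of_int \<lfloor>\<gamma> / 2\<rfloor> + 1" by linarith+
  have b: "0 \<le> \<lfloor>\<gamma> / 2\<rfloor>" using assms by simp
  have c: "2 * \<lfloor>\<gamma> / 2\<rfloor> \<le> \<lfloor>\<gamma>\<rfloor>" using a by (simp add: le_floor_iff)
  have "\<gamma> < 2 * of_int \<lfloor>\<gamma> / 2\<rfloor> + 2" using a(2) by linarith
  then have "\<gamma> < of_int (2 * \<lfloor>\<gamma> / 2\<rfloor> + 2)" by simp
  then have d: "\<lfloor>\<gamma>\<rfloor> < 2 * \<lfloor>\<gamma> / 2\<rfloor> + 2" by (simp only: floor_less_iff)
  show "2 * nat \<lfloor>\<gamma> / 2\<rfloor> \<le> nat \<lfloor>\<gamma>\<rfloor>" using b c by linarith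
  show "nat \<lfloor>\<gamma>\<rfloor> \<le> 2 * nat \<lfloor>\<gamma> / 2\<rfloor> + 1" using b d by linarith
qed

lemma cE_nz:
  assumes "\<gamma> > 0" "\<gamma> \<notin> \<nat>" "j \<le> nat \<lfloor>\<gamma> / 2\<rfloor>"
  shows "prod_list (map (\<lambda>t. ((real n / 2 - \<gamma> + 2 * real j) - t) * (real n - (real n / 2 - \<gamma> + 2 * real j) - t))
     (ts_even n \<gamma> j)) \<noteq> 0"
proof -
  have jj: "2 * j \<le> nat \<lfloor>\<gamma>\<rfloor>" using floor_facts[OF assms(1)] assms(3) by linarith
  have "((real n / 2 - \<gamma> + 2 * real j) - (sval n \<gamma> - 2 * real l)) * (real n - (real n / 2 - \<gamma> + 2 * real j) - (sval n \<gamma> - 2 * real l)) \<noteq> 0"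
    if l: "l \<in> set ([0..<j] @ [nat \<lfloor>\<gamma>\<rfloor> + 1 - j ..< nat \<lfloor>\<gamma>\<rfloor> + 1])" for l
  proof -
    have lj: "l \<noteq> j" using l jj by auto
    have h1: "2 * real j + 2 * real l - 2 * \<gamma> \<noteq> 0"
    proof
      assume "2 * real j + 2 * real l - 2 * \<gamma> = 0"
      then have "\<gamma> = of_int (int (j + l))" by simp
      then show False using not_int[OF assms(1,2)] by blast
    qed
    have h2: "2 * real l - 2 * real j \<noteq> 0" using lj by simp
    have "((real n / 2 - \<gamma> + 2 * real j) - (sval n \<gamma> - 2 * real l)) = 2 * real j + 2 * real l - 2 * \<gamma>"
      "(real n - (real n / 2 - \<gamma> + 2 * real j) - (sval n \<gamma> - 2 * real l)) = 2 * real l - 2 * real j"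
      by (simp_all add: sval_def algebra_simps)
    then show ?thesis using h1 h2 by simp
  qed
  then show ?thesis unfolding ts_even_def prod_list_zero_iff by auto
qed

lemma cO_nz:
  assumes "\<gamma> > 0" "\<gamma> \<notin> \<nat>" "j + 1 \<le> nat \<lfloor>\<gamma>\<rfloor> - nat \<lfloor>\<gamma> / 2\<rfloor>"
  shows "prod_list (map (\<lambda>t. ((real n / 2 - \<gamma> + 2 * real j + 2 * fracp \<gamma>) - t) * (real n - (real n / 2 - \<gamma> + 2 * real j + 2 * fracp \<gamma>) - t))
     (ts_odd n \<gamma> j)) \<noteq> 0"
proof -
  have jj: "2 * j + 1 \<le> nat \<lfloor>\<gamma>\<rfloor>" using floor_facts[OF assms(1)] assms(3) by linarith
  have g0: "0 \<le> \<lfloor>\<gamma>\<rfloor>" using assms(1) by simp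
  have "((real n / 2 - \<gamma> + 2 * real j + 2 * fracp \<gamma>) - (sval n \<gamma> - 2 * real l)) * (real n - (real n / 2 - \<gamma> + 2 * real j + 2 * fracp \<gamma>) - (sval n \<gamma> - 2 * real l)) \<noteq> 0"
    if l: "l \<in> set ([0..<j+1] @ [nat \<lfloor>\<gamma>\<rfloor> + 1 - j ..< nat \<lfloor>\<gamma>\<rfloor> + 1])" for l
  proof -
    have lj: "j + l \<noteq> nat \<lfloor>\<gamma>\<rfloor>" using l jj by auto
    have h1: "2 * real j + 2 * real l - 2 * of_int \<lfloor>\<gamma>\<rfloor> \<noteq> 0"
    proof
      assume "2 * real j + 2 * real l - 2 * of_int \<lfloor>\<gamma>\<rfloor> = 0"
      then have "real (j + l) = real (nat \<lfloor>\<gamma>\<rfloor>)" using g0 by simp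
      then show False using lj by linarith
    qed
    have h2: "2 * real l - 2 * real j - 2 * fracp \<gamma> \<noteq> 0"
    proof
      assume "2 * real l - 2 * real j - 2 * fracp \<gamma> = 0"
      then have "\<gamma> = of_int (\<lfloor>\<gamma>\<rfloor> + int l - int j)" unfolding fracp_def by simp
      then show False using not_int[OF assms(1,2)] by blast
    qed
    have "((real n / 2 - \<gamma> + 2 * real j + 2 * fracp \<gamma>) - (sval n \<gamma> - 2 * real l)) = 2 * real j + 2 * real l - 2 * of_int \<lfloor>\<gamma>\<rfloor>"
      "(real n - (real n / 2 - \<gamma> + 2 * real j + 2 * fracp \<gamma>) - (sval n \<gamma> - 2 * real l)) = 2 * real l - 2 * real j - 2 * fracp \<gamma>"
      by (simp_all add: sval_def fracp_def algebra_simps)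
    then show ?thesis using h1 h2 by simp
  qed
  note nz = this
  show ?thesis unfolding ts_odd_def prod_list_zero_iff
  proof
    assume "0 \<in> set (map (\<lambda>t. ((real n / 2 - \<gamma> + 2 * real j + 2 * fracp \<gamma>) - t) * (real n - (real n / 2 - \<gamma> + 2 * real j + 2 * fracp \<gamma>) - t))
       (map (\<lambda>l. sval n \<gamma> - 2 * real l) ([0..<j+1] @ [nat \<lfloor>\<gamma>\<rfloor> + 1 - j ..< nat \<lfloor>\<gamma>\<rfloor> + 1])))"
    then have "0 \<in> (\<lambda>t. ((real n / 2 - \<gamma> + 2 * real j + 2 * fracp \<gamma>) - t) * (real n - (real n / 2 - \<gamma> + 2 * real j + 2 * fracp \<gamma>) - t))
       ` (\<lambda>l. sval n \<gamma> - 2 * real l) ` set ([0..<j+1] @ [nat \<lfloor>\<gamma>\<rfloor> + 1 - j ..< nat \<lfloor>\<gamma>\<rfloor> + 1])"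
      by (simp only: set_map)
    then obtain l where l: "l \<in> set ([0..<j+1] @ [nat \<lfloor>\<gamma>\<rfloor> + 1 - j ..< nat \<lfloor>\<gamma>\<rfloor> + 1])"
      and e: "0 = ((real n / 2 - \<gamma> + 2 * real j + 2 * fracp \<gamma>) - (sval n \<gamma> - 2 * real l)) * (real n - (real n / 2 - \<gamma> + 2 * real j + 2 * fracp \<gamma>) - (sval n \<gamma> - 2 * real l))"
      by blast
    show False using nz[OF l] e by simp
  qed
qed

lemma even_lim:
  fixes F U :: "'a::euclidean_space \<Rightarrow> real"
  assumes "DIM('a) = n + 1" "smooth_on (- {0}) F" "norm \<theta> = 1"
    and "\<forall>x. U x = rhoB x ^ e * F x" "e = 2 * j + 2 * k"
  shows "(Bpre_even n \<gamma> j U \<longlongrightarrow> (if k = 0 then prod_list (map (\<lambda>t. ((real n / 2 - \<gamma> + 2 * real j) - t) * (real n - (real n / 2 - \<gamma> + 2 * real j) - t))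
     (ts_even n \<gamma> j)) * F \<theta> else 0)) (at \<theta> within ball 0 1)"
proof -
  define a where "a = real n / 2 - \<gamma> + 2 * real j"
  define V where "V = (\<lambda>y. rhoB y powr (real n / 2 - \<gamma>) * U y)"
  have "Inv (a + 2 * real k) V F 1"
  proof (rule Inv_base[OF assms(2)], intro ballI)
    fix y :: 'a assume y: "y \<in> Aset"
    have rp: "rho (norm y) > 0" using Aset_norm[OF y] rho_pos by blast
    have "V y = rho (norm y) powr (real n / 2 - \<gamma>) * rho (norm y) powr (real e) * F y"
      unfolding V_def using assms(4) rp by (simp add: rhoB_rho powr_realpow)
    also have "\<dots> = rho (norm y) powr (a + 2 * real k) * F y"
      by (simp add: powr_add[symmetric] a_def assms(5) algebra_simps)
    finally show "V y = rho (norm y) powr (a + 2 * real k) * F y" .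
  qed
  from Inv_prod[OF this assms(1), of "ts_even n \<gamma> j"]
  have I: "Inv (a + 2 * real k) (Dprod n (ts_even n \<gamma> j) V) F
     (1 * prod_list (map (\<lambda>t. (a + 2 * real k - t) * (real n - (a + 2 * real k) - t)) (ts_even n \<gamma> j)))" .
  have "((\<lambda>x. rhoB x powr (- real n / 2 + \<gamma> - 2 * real j) * Dprod n (ts_even n \<gamma> j) V x) \<longlongrightarrow>
      (if k = 0 then (1 * prod_list (map (\<lambda>t. (a + 2 * real k - t) * (real n - (a + 2 * real k) - t)) (ts_even n \<gamma> j))) * F \<theta> else 0))
      (at \<theta> within ball 0 1)"
    by (rule Inv_lim[OF I refl _ assms(3)]) (simp add: a_def)
  then show ?thesis unfolding Bpre_even_def[abs_def] V_def a_def by (cases "k = 0") simp_all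
qed

lemma odd_lim:
  fixes F U :: "'a::euclidean_space \<Rightarrow> real"
  assumes "DIM('a) = n + 1" "smooth_on (- {0}) F" "norm \<theta> = 1"
    and "\<forall>x. U x = rhoB x powr e * F x" "e = 2 * real j + 2 * fracp \<gamma> + 2 * real k"
  shows "(Bpre_odd n \<gamma> j U \<longlongrightarrow> (if k = 0 then prod_list (map (\<lambda>t. ((real n / 2 - \<gamma> + 2 * real j + 2 * fracp \<gamma>) - t) * (real n - (real n / 2 - \<gamma> + 2 * real j + 2 * fracp \<gamma>) - t))
     (ts_odd n \<gamma> j)) * F \<theta> else 0)) (at \<theta> within ball 0 1)"
proof -
  define a where "a = real n / 2 - \<gamma> + 2 * real j + 2 * fracp \<gamma>"
  define V where "V = (\<lambda>y. rhoB y powr (real n / 2 - \<gamma>) * U y)"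
  have "Inv (a + 2 * real k) V F 1"
  proof (rule Inv_base[OF assms(2)], intro ballI)
    fix y :: 'a assume y: "y \<in> Aset"
    have rp: "rho (norm y) > 0" using Aset_norm[OF y] rho_pos by blast
    have "V y = rho (norm y) powr (real n / 2 - \<gamma>) * rho (norm y) powr e * F y"
      unfolding V_def using assms(4) rp by (simp add: rhoB_rho)
    also have "\<dots> = rho (norm y) powr (a + 2 * real k) * F y"
      by (simp add: powr_add[symmetric] a_def assms(5) algebra_simps)
    finally show "V y = rho (norm y) powr (a + 2 * real k) * F y" .
  qed
  from Inv_prod[OF this assms(1), of "ts_odd n \<gamma> j"]
  have I: "Inv (a + 2 * real k) (Dprod n (ts_odd n \<gamma> j) V) F
     (1 * prod_list (map (\<lambda>t. (a + 2 * real k - t) * (real n - (a + 2 * real k) - t)) (ts_odd n \<gamma> j)))" .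
  have "((\<lambda>x. rhoB x powr (- real n / 2 + \<gamma> - 2 * real j - 2 * fracp \<gamma>) * Dprod n (ts_odd n \<gamma> j) V x) \<longlongrightarrow>
      (if k = 0 then (1 * prod_list (map (\<lambda>t. (a + 2 * real k - t) * (real n - (a + 2 * real k) - t)) (ts_odd n \<gamma> j))) * F \<theta> else 0))
      (at \<theta> within ball 0 1)"
    by (rule Inv_lim[OF I refl _ assms(3)]) (simp add: a_def)
  then show ?thesis unfolding Bpre_odd_def[abs_def] V_def a_def by (cases "k = 0") simp_all
qed

lemma base_pt: "norm (base_pt :: 'a::euclidean_space) = 1"
proof -
  have "(base_pt :: 'a) \<in> Basis" unfolding base_pt_def by (rule someI_ex) (use nonempty_Basis in blast)
  then show ?thesis by simp
qed

lemma nontriv: "norm (\<theta>::'a::euclidean_space) = 1 \<Longrightarrow> \<not> trivial_limit (at \<theta> within ball 0 1)"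
  unfolding trivial_limit_within islimpt_ball by simp

lemma lim_rhoB:
  assumes "norm (\<theta>::'a::euclidean_space) = 1"
  shows "(rhoB \<longlongrightarrow> 0) (at \<theta> within ball 0 1)"
proof -
  have "((\<lambda>x. norm x) \<longlongrightarrow> 1) (at \<theta> within ball 0 1)"
    using assms tendsto_norm[OF tendsto_ident_at, of \<theta> "ball 0 1"] by simp
  moreover have "isCont rho 1" using DERIV_isCont[OF rho_deriv[of 1]] by simp
  ultimately have "((\<lambda>x. rho (norm x)) \<longlongrightarrow> rho 1) (at \<theta> within ball 0 1)" using isCont_tendsto_compose by blast
  moreover have "rho 1 = 0" by (simp add: rho_def)
  ultimately show ?thesis by (simp add: rhoB_rho[abs_def])
qed

theorem lemma4p5:
  fixes \<gamma> :: real and f :: "'a::euclidean_space \<Rightarrow> real" and n m :: nat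
  assumes "n \<ge> 1" and "DIM('a) = n + 1"
    and "\<gamma> > 0" and "\<gamma> \<notin> \<nat>"
    and "smooth_on_sphere f"
    and "m \<ge> 1"
  shows "(\<forall>j \<le> nat \<lfloor>\<gamma> / 2\<rfloor>. \<forall>\<theta> \<in> sphere 0 1.
            (Bfun_even n \<gamma> j (\<lambda>x. rhoB x ^ (2 * j) * radial_ext f x) \<longlongrightarrow> f \<theta>)
              (at \<theta> within ball 0 1) \<and>
            (Bfun_even n \<gamma> j (\<lambda>x. rhoB x ^ (2 * j + 2 * m) * radial_ext f x) \<longlongrightarrow> 0)
              (at \<theta> within ball 0 1))
       \<and> (\<forall>j. j + 1 \<le> nat \<lfloor>\<gamma>\<rfloor> - nat \<lfloor>\<gamma> / 2\<rfloor> \<longrightarrow> (\<forall>\<theta> \<in> sphere 0 1.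
            (Bfun_odd n \<gamma> j (\<lambda>x. rhoB x powr (2 * real j + 2 * fracp \<gamma>) * radial_ext f x)
               \<longlongrightarrow> f \<theta>) (at \<theta> within ball 0 1) \<and>
            (Bfun_odd n \<gamma> j (\<lambda>x. rhoB x powr (2 * real j + 2 * fracp \<gamma> + 2 * real m) * radial_ext f x)
               \<longlongrightarrow> 0) (at \<theta> within ball 0 1)))"
proof -
  define F where "F = radial_ext f"
  have sF: "smooth_on (- {0}) F" using assms(5) unfolding smooth_on_sphere_def F_def .
  have s1: "smooth_on (- {0}) (\<lambda>x::'a. 1)" by (rule sm_const)
  have Fth: "F \<theta> = f \<theta>" if "norm \<theta> = 1" for \<theta> using that by (simp add: F_def radial_ext_def)
  have m0: "m \<noteq> 0" using assms(6) by simp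
  have bp: "norm (base_pt :: 'a) = 1" by (rule base_pt)
  show ?thesis
  proof (intro conjI allI impI ballI)
    fix j \<theta> assume j: "j \<le> nat \<lfloor>\<gamma> / 2\<rfloor>" and th: "(\<theta>::'a) \<in> sphere 0 1"
    have th1: "norm \<theta> = 1" using th by simp
    have t0: "\<theta> \<noteq> 0" using th1 by auto
    define c where "c = prod_list (map (\<lambda>t. ((real n / 2 - \<gamma> + 2 * real j) - t) * (real n - (real n / 2 - \<gamma> + 2 * real j) - t))
       (ts_even n \<gamma> j))"
    have cnz: "c \<noteq> 0" unfolding c_def by (rule cE_nz[OF assms(3,4) j])
    have L1: "(Bpre_even n \<gamma> j (\<lambda>x. rhoB x ^ (2 * j) * radial_ext f x) \<longlongrightarrow> c * F \<theta>) (at \<theta> within ball 0 1)"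
      using even_lim[OF assms(2) sF th1, of "\<lambda>x. rhoB x ^ (2 * j) * radial_ext f x" "2 * j" j 0 \<gamma>]
      by (simp add: c_def F_def)
    have L2: "(Bpre_even n \<gamma> j (\<lambda>x. rhoB x ^ (2 * j + 2 * m) * radial_ext f x) \<longlongrightarrow> 0) (at \<theta> within ball 0 1)"
      using even_lim[OF assms(2) sF th1, of "\<lambda>x. rhoB x ^ (2 * j + 2 * m) * radial_ext f x" "2 * j + 2 * m" j m \<gamma>] m0
      by (simp add: F_def)
    have Lb: "(Bpre_even n \<gamma> j (\<lambda>x::'a. rhoB x ^ (2 * j)) \<longlongrightarrow> c * 1) (at base_pt within ball 0 1)"
      using even_lim[OF assms(2) s1 bp, of "\<lambda>x. rhoB x ^ (2 * j)" "2 * j" j 0 \<gamma>]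
      by (simp add: c_def)
    have bE: "b_even n \<gamma> j TYPE('a) = c"
      unfolding b_even_def bdry_val_def using tendsto_Lim[OF nontriv[OF bp] Lb] by simp
    show "(Bfun_even n \<gamma> j (\<lambda>x. rhoB x ^ (2 * j) * radial_ext f x) \<longlongrightarrow> f \<theta>) (at \<theta> within ball 0 1)"
    proof (cases "j = 0")
      case True
      have "((\<lambda>x. rhoB x ^ (2 * j) * radial_ext f x) \<longlongrightarrow> F \<theta>) (at \<theta> within ball 0 1)"
        using lim_G[OF sF t0] True by (simp add: F_def)
      then show ?thesis unfolding Bfun_even_def[abs_def] using True Fth[OF th1] by simp
    next
      case False
      have "((\<lambda>x. (1 / c) * Bpre_even n \<gamma> j (\<lambda>x. rhoB x ^ (2 * j) * radial_ext f x) x) \<longlongrightarrow> (1 / c) * (c * F \<theta>)) (at \<theta> within ball 0 1)"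
        by (rule tendsto_mult[OF tendsto_const L1])
      then show ?thesis unfolding Bfun_even_def[abs_def] using False bE cnz Fth[OF th1] by simp
    qed
    show "(Bfun_even n \<gamma> j (\<lambda>x. rhoB x ^ (2 * j + 2 * m) * radial_ext f x) \<longlongrightarrow> 0) (at \<theta> within ball 0 1)"
    proof (cases "j = 0")
      case True
      have "((\<lambda>x. rhoB x ^ (2 * j + 2 * m) * F x) \<longlongrightarrow> 0 ^ (2 * j + 2 * m) * F \<theta>) (at \<theta> within ball 0 1)"
        by (intro tendsto_mult tendsto_power lim_rhoB[OF th1] lim_G[OF sF t0])
      then show ?thesis unfolding Bfun_even_def[abs_def] using True m0 by (simp add: F_def power_0_left)
    next
      case False
      have "((\<lambda>x. (1 / c) * Bpre_even n \<gamma> j (\<lambda>x. rhoB x ^ (2 * j + 2 * m) * radial_ext f x) x) \<longlongrightarrow> (1 / c) * 0) (at \<theta> within ball 0 1)"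
        by (rule tendsto_mult[OF tendsto_const L2])
      then show ?thesis unfolding Bfun_even_def[abs_def] using False bE by simp
    qed
  next
    fix j \<theta> assume j: "j + 1 \<le> nat \<lfloor>\<gamma>\<rfloor> - nat \<lfloor>\<gamma> / 2\<rfloor>" and th: "(\<theta>::'a) \<in> sphere 0 1"
    have th1: "norm \<theta> = 1" using th by simp
    define c where "c = prod_list (map (\<lambda>t. ((real n / 2 - \<gamma> + 2 * real j + 2 * fracp \<gamma>) - t) * (real n - (real n / 2 - \<gamma> + 2 * real j + 2 * fracp \<gamma>) - t))
       (ts_odd n \<gamma> j))"
    have cnz: "c \<noteq> 0" unfolding c_def by (rule cO_nz[OF assms(3,4) j])
    have L1: "(Bpre_odd n \<gamma> j (\<lambda>x. rhoB x powr (2 * real j + 2 * fracp \<gamma>) * radial_ext f x) \<longlongrightarrow> c * F \<theta>) (at \<theta> within ball 0 1)"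
      using odd_lim[OF assms(2) sF th1, of "\<lambda>x. rhoB x powr (2 * real j + 2 * fracp \<gamma>) * radial_ext f x" "2 * real j + 2 * fracp \<gamma>" j \<gamma> 0]
      by (simp add: c_def F_def)
    have L2: "(Bpre_odd n \<gamma> j (\<lambda>x. rhoB x powr (2 * real j + 2 * fracp \<gamma> + 2 * real m) * radial_ext f x) \<longlongrightarrow> 0) (at \<theta> within ball 0 1)"
      using odd_lim[OF assms(2) sF th1, of "\<lambda>x. rhoB x powr (2 * real j + 2 * fracp \<gamma> + 2 * real m) * radial_ext f x" "2 * real j + 2 * fracp \<gamma> + 2 * real m" j \<gamma> m] m0
      by (simp add: F_def)
    have Lb: "(Bpre_odd n \<gamma> j (\<lambda>x::'a. rhoB x powr (2 * real j + 2 * fracp \<gamma>)) \<longlongrightarrow> c * 1) (at base_pt within ball 0 1)"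
      using odd_lim[OF assms(2) s1 bp, of "\<lambda>x. rhoB x powr (2 * real j + 2 * fracp \<gamma>)" "2 * real j + 2 * fracp \<gamma>" j \<gamma> 0]
      by (simp add: c_def)
    have bO: "b_odd n \<gamma> j TYPE('a) = - c"
      unfolding b_odd_def bdry_val_def using tendsto_Lim[OF nontriv[OF bp] Lb] by simp
    show "(Bfun_odd n \<gamma> j (\<lambda>x. rhoB x powr (2 * real j + 2 * fracp \<gamma>) * radial_ext f x) \<longlongrightarrow> f \<theta>) (at \<theta> within ball 0 1)"
    proof -
      have "((\<lambda>x. (1 / c) * Bpre_odd n \<gamma> j (\<lambda>x. rhoB x powr (2 * real j + 2 * fracp \<gamma>) * radial_ext f x) x) \<longlongrightarrow> (1 / c) * (c * F \<theta>)) (at \<theta> within ball 0 1)"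
        by (rule tendsto_mult[OF tendsto_const L1])
      then show ?thesis unfolding Bfun_odd_def[abs_def] using bO cnz Fth[OF th1] by simp
    qed
    show "(Bfun_odd n \<gamma> j (\<lambda>x. rhoB x powr (2 * real j + 2 * fracp \<gamma> + 2 * real m) * radial_ext f x) \<longlongrightarrow> 0) (at \<theta> within ball 0 1)"
    proof -
      have "((\<lambda>x. (1 / c) * Bpre_odd n \<gamma> j (\<lambda>x. rhoB x powr (2 * real j + 2 * fracp \<gamma> + 2 * real m) * radial_ext f x) x) \<longlongrightarrow> (1 / c) * 0) (at \<theta> within ball 0 1)"
        by (rule tendsto_mult[OF tendsto_const L2])
      then show ?thesis unfolding Bfun_odd_def[abs_def] using bO by simp
    qed
  qed
qed

end
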